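(* Assume Hypothesis 2 below and set $\rho=\lambda/\mu$ and $\bar\omega_0^{*,D}=\dfrac{\rho d-\mu^{-1}}{\rho-1}$. Then for every $\xi>0$, $\mathbb{P}(\bar\omega_0^{n,D}\le\bar\omega_0^{*,D}-\xi)\to0$ as $n\to\infty$.
   Context: Hypothesis 2 (M/M/1/1+D-EDF systems): for each $n\ge1$, an M/M/1/1+GI-EDF queue (Poisson arrivals, one non-idling server, infinite buffer, non-preemptive Earliest-Deadline-First discipline, residual time credits decreasing at unit rate, a customer whose residual credit reaches $0$ before entering service is lost) such that: initially there are $n+1$ customers in the buffer, all with time credit $nd$, where $d>0$; the arrival intensity $\lambda^n$ satisfies $\lambda^n\to\lambda>0$; service durations are i.i.d. exponential with parameter $\mu^n$, $\mu^n\to\mu$ where $d^{-1}<\mu<\lambda$; the initial time credit of every arriving customer is the deterministic number $d^n$, with $d^n/n\to d$. Let $\nu^{n,D}_t$ be its profile (point measure with a unit atom at the residual time credit of each customer waiting in the buffer at $t$ and of each customer lost up to $t$), $t_1(\nu)$ the smallest atom of $\nu$ in $(0,\infty)$, $\omega_0^{n,D}=\inf\{t\ge0:t_1(\nu^{n,D}_t)=0\}$ the first time of loss, and $\bar\omega_0^{n,D}=\omega_0^{n,D}/n$. *)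

theory Defs
  imports "HOL-Probability.Probability"
begin

text \<open>
  Deterministic sample-path construction of the M/M/1/1+D-EDF queue of Hypothesis 2
  (n-th system).  Parameters: n, d (initial credit of the n+1 initial customers is n*d),
  dn (initial credit of every arriving customer), A (interarrival times: the k-th arrival,
  k = 0,1,..., occurs at time A 0 + ... + A k), S (service durations: S m is the duration
  of the m-th service started, m = 0,1,...).
\<close>

datatype cust = Init nat | Arr nat

definition is_cust :: "nat \<Rightarrow> cust \<Rightarrow> bool" where
  "is_cust n c = (case c of Init i \<Rightarrow> i \<le> n | Arr k \<Rightarrow> True)"

definition arr_time :: "(nat \<Rightarrow> real) \<Rightarrow> cust \<Rightarrow> real" where
  "arr_time A c = (case c of Init i \<Rightarrow> 0 | Arr k \<Rightarrow> (\<Sum>i\<le>k. A i))"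

text \<open>Deadline = arrival time + initial time credit (residual credit at time t is
  deadline - t).\<close>
definition deadline :: "nat \<Rightarrow> real \<Rightarrow> real \<Rightarrow> (nat \<Rightarrow> real) \<Rightarrow> cust \<Rightarrow> real" where
  "deadline n d dn A c = (case c of Init i \<Rightarrow> real n * d | Arr k \<Rightarrow> arr_time A c + dn)"

definition avail :: "nat \<Rightarrow> real \<Rightarrow> real \<Rightarrow> (nat \<Rightarrow> real) \<Rightarrow> real \<Rightarrow> cust set \<Rightarrow> cust set" where
  "avail n d dn A t Sd = {c. is_cust n c \<and> arr_time A c \<le> t \<and> c \<notin> Sd \<and> t < deadline n d dn A c}"

definition edf_pick :: "nat \<Rightarrow> real \<Rightarrow> real \<Rightarrow> (nat \<Rightarrow> real) \<Rightarrow> cust set \<Rightarrow> cust" where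
  "edf_pick n d dn A X = (SOME c. c \<in> X \<and> (\<forall>c'\<in>X. deadline n d dn A c \<le> deadline n d dn A c'))"

text \<open>sim m = (time at which the m-th service starts, set of customers that entered
  service before it).  Non-idling, non-preemptive: the next service starts at the end of
  the current one if somebody is waiting, otherwise at the next arrival.\<close>
fun sim :: "nat \<Rightarrow> real \<Rightarrow> real \<Rightarrow> (nat \<Rightarrow> real) \<Rightarrow> (nat \<Rightarrow> real) \<Rightarrow> nat \<Rightarrow> real \<times> cust set" where
  "sim n d dn A S 0 = (0, {})"
| "sim n d dn A S (Suc m) =
     (let (\<sigma>, Sd) = sim n d dn A S m;
          c = edf_pick n d dn A (avail n d dn A \<sigma> Sd);
          Sd' = insert c Sd;
          e = \<sigma> + S m;
          \<sigma>' = (if avail n d dn A e Sd' \<noteq> {} then e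
                else Inf {arr_time A (Arr k) | k. e < arr_time A (Arr k)})
      in (\<sigma>', Sd'))"

definition served :: "nat \<Rightarrow> real \<Rightarrow> real \<Rightarrow> (nat \<Rightarrow> real) \<Rightarrow> (nat \<Rightarrow> real) \<Rightarrow> cust set" where
  "served n d dn A S = (\<Union>m. snd (sim n d dn A S m))"

text \<open>A customer that never enters service is lost when its residual credit hits 0,
  i.e. at its deadline.\<close>
definition lost :: "nat \<Rightarrow> real \<Rightarrow> real \<Rightarrow> (nat \<Rightarrow> real) \<Rightarrow> (nat \<Rightarrow> real) \<Rightarrow> cust set" where
  "lost n d dn A S = {c. is_cust n c \<and> c \<notin> served n d dn A S}"

text \<open>First time of loss omega_0 (= +infinity if no customer is ever lost).\<close>
definition first_loss :: "nat \<Rightarrow> real \<Rightarrow> real \<Rightarrow> (nat \<Rightarrow> real) \<Rightarrow> (nat \<Rightarrow> real) \<Rightarrow> ereal" where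
  "first_loss n d dn A S = Inf ((\<lambda>c. ereal (deadline n d dn A c)) ` lost n d dn A S)"

end

theory Submission
  imports Defs
begin

locale qd =
  fixes n :: nat and d dn :: real and A S :: "nat \<Rightarrow> real"
  assumes A_pos: "\<And>k. 0 < A k" and S_nn: "\<And>j. 0 \<le> S j"
    and dn_pos: "0 < dn" and nd_pos: "0 < real n * d"
begin

abbreviation "arr \<equiv> arr_time A"
abbreviation "dl \<equiv> deadline n d dn A"
abbreviation "av \<equiv> avail n d dn A"
definition "sg m = fst (sim n d dn A S m)"
definition "Sd m = snd (sim n d dn A S m)"
definition "pk m = edf_pick n d dn A (av (sg m) (Sd m))"
definition "ak k = (\<Sum>i\<le>k. A i)"

lemma sim_Suc:
  "Sd (Suc m) = insert (pk m) (Sd m)"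
  "sg (Suc m) = (if av (sg m + S m) (insert (pk m) (Sd m)) \<noteq> {} then sg m + S m
     else Inf {arr (Arr k) | k. sg m + S m < arr (Arr k)})"
  by (simp_all add: sg_def Sd_def pk_def split_beta Let_def)

lemma sim_0: "sg 0 = 0" "Sd 0 = {}" by (simp_all add: sg_def Sd_def)

lemma arr_simps[simp]: "arr (Arr k) = ak k" "arr (Init i) = 0"
  by (simp_all add: arr_time_def ak_def)

lemma dl_simps[simp]: "dl (Arr k) = ak k + dn" "dl (Init i) = real n * d"
  by (simp_all add: deadline_def)

lemma ak_strict: "k < k' \<Longrightarrow> ak k < ak k'"
proof (induction k' rule: less_induct)
  case (less k')
  then obtain m where m: "k' = Suc m" by (cases k') auto
  have "ak k' = ak m + A k'" using m by (simp add: ak_def)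
  moreover have "ak k \<le> ak m"
    using less m by (cases "k = m") (auto intro: less_imp_le)
  ultimately show ?case using A_pos[of k'] by simp
qed

lemma ak_mono: "k \<le> k' \<Longrightarrow> ak k \<le> ak k'"
  using ak_strict by (cases "k = k'") (auto intro: less_imp_le)

lemma ak_less_iff: "ak k < ak k' \<longleftrightarrow> k < k'"
  using ak_strict ak_mono by (meson not_less)

lemma ak_le_iff: "ak k \<le> ak k' \<longleftrightarrow> k \<le> k'"
  using ak_strict ak_mono by (meson not_less)

lemma ak_pos: "0 < ak k"
  using ak_mono[of 0 k] A_pos[of 0] by (simp add: ak_def)

lemma arr_nn: "0 \<le> arr c"
  using ak_pos by (cases c) (auto intro: less_imp_le)

lemma dl_pos: "0 < dl c"
  using ak_pos dn_pos nd_pos by (cases c) (auto simp: add_pos_pos)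

lemma cust_fin: "finite {c. is_cust n c \<and> arr c < ak K}"
proof (rule finite_subset)
  show "{c. is_cust n c \<and> arr c < ak K} \<subseteq> Init ` {..n} \<union> Arr ` {..<K}"
  proof
    fix c assume "c \<in> {c. is_cust n c \<and> arr c < ak K}"
    then show "c \<in> Init ` {..n} \<union> Arr ` {..<K}"
      by (cases c) (auto simp: is_cust_def ak_less_iff)
  qed
qed auto

lemma cust_card: "card {c. is_cust n c \<and> arr c < ak K} \<le> n + 1 + K"
proof -
  have "{c. is_cust n c \<and> arr c < ak K} \<subseteq> Init ` {..n} \<union> Arr ` {..<K}"
  proof
    fix c assume "c \<in> {c. is_cust n c \<and> arr c < ak K}"
    then show "c \<in> Init ` {..n} \<union> Arr ` {..<K}"
      by (cases c) (auto simp: is_cust_def ak_less_iff)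
  qed
  then have "card {c. is_cust n c \<and> arr c < ak K} \<le> card (Init ` {..n} \<union> Arr ` {..<K})"
    by (intro card_mono) auto
  also have "\<dots> \<le> card (Init ` {..n}) + card (Arr ` {..<K})" by (rule card_Un_le)
  also have "\<dots> \<le> (n+1) + K" 
    using card_image_le[of "{..n}" Init] card_image_le[of "{..<K}" Arr] by simp
  finally show ?thesis by simp
qed

lemma av_fin: "t < ak K \<Longrightarrow> finite (av t X)"
  by (rule finite_subset[OF _ cust_fin[of K]]) (auto simp: avail_def)

lemma pick_spec:
  assumes "finite X" "X \<noteq> {}"
  shows "edf_pick n d dn A X \<in> X \<and> (\<forall>c'\<in>X. dl (edf_pick n d dn A X) \<le> dl c')"
proof -
  obtain c where c: "c \<in> X" "dl c = Min (dl ` X)"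
  proof -
    have "Min (dl ` X) \<in> dl ` X" using Min_in[of "dl ` X"] assms by auto
    then show ?thesis using that by auto
  qed
  have "\<forall>c'\<in>X. dl c \<le> dl c'" using c assms by auto
  then have ex: "\<exists>c. c \<in> X \<and> (\<forall>c'\<in>X. dl c \<le> dl c')" using c by blast
  show ?thesis unfolding edf_pick_def by (rule someI_ex[OF ex])
qed

definition "invq m \<longleftrightarrow> av (sg m) (Sd m) \<noteq> {} \<and> (\<forall>c\<in>Sd m. arr c \<le> sg m) \<and> 0 \<le> sg m"

lemma invq0: "invq 0"
proof -
  have "Init 0 \<in> av 0 {}" using nd_pos by (auto simp: avail_def is_cust_def)
  then show ?thesis by (auto simp: invq_def sim_0)
qed

lemma step:
  assumes I: "invq j" and e: "sg j + S j < ak K"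
  shows "pk j \<in> av (sg j) (Sd j)" "\<forall>c'\<in>av (sg j) (Sd j). dl (pk j) \<le> dl c'"
    "sg j + S j \<le> sg (Suc j)" "invq (Suc j)"
    "sg (Suc j) \<noteq> sg j + S j \<Longrightarrow> av (sg j + S j) (Sd (Suc j)) = {} \<and>
        (\<forall>k. sg j + S j < ak k \<longrightarrow> sg (Suc j) \<le> ak k)"
    "sg (Suc j) \<le> ak K"
proof -
  have fin: "finite (av (sg j) (Sd j))" using e S_nn[of j] by (intro av_fin[of _ K]) auto
  have ne: "av (sg j) (Sd j) \<noteq> {}" using I by (simp add: invq_def)
  note ps = pick_spec[OF fin ne]
  show pj: "pk j \<in> av (sg j) (Sd j)" "\<forall>c'\<in>av (sg j) (Sd j). dl (pk j) \<le> dl c'"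
    using ps by (auto simp: pk_def)
  let ?e = "sg j + S j"
  define k0 where "k0 = (LEAST k. ?e < ak k)"
  have k0: "?e < ak k0" unfolding k0_def by (rule LeastI[of _ K]) (use e in auto)
  have k0m: "\<And>k. ?e < ak k \<Longrightarrow> k0 \<le> k" unfolding k0_def by (rule Least_le)
  have Inf_eq: "Inf {arr (Arr k) | k. ?e < arr (Arr k)} = ak k0"
    by (rule cInf_eq_minimum) (use k0 k0m ak_mono in auto)
  have k0K: "ak k0 \<le> ak K" using k0m[of K] e ak_mono by auto
  have sd_arr: "\<forall>c\<in>Sd (Suc j). arr c \<le> sg j"
    using I pj(1) by (auto simp: invq_def sim_Suc avail_def)
  have case2: "Arr k0 \<in> av (ak k0) (Sd (Suc j))"
    using sd_arr k0 S_nn[of j] dn_pos by (auto simp: avail_def is_cust_def)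
  have sS: "sg (Suc j) = (if av ?e (Sd (Suc j)) \<noteq> {} then ?e else ak k0)"
    using Inf_eq by (simp add: sim_Suc)
  show ge: "?e \<le> sg (Suc j)" using sS k0 by auto
  show "sg (Suc j) \<le> ak K" using sS k0K e by auto
  show "invq (Suc j)"
    unfolding invq_def
  proof (intro conjI)
    show "av (sg (Suc j)) (Sd (Suc j)) \<noteq> {}" using sS case2 by (auto split: if_splits)
    show "\<forall>c\<in>Sd (Suc j). arr c \<le> sg (Suc j)" using sd_arr ge S_nn[of j] by force
    show "0 \<le> sg (Suc j)" using ge I S_nn[of j] by (auto simp: invq_def)
  qed
  show "sg (Suc j) \<noteq> ?e \<Longrightarrow> av ?e (Sd (Suc j)) = {} \<and> (\<forall>k. ?e < ak k \<longrightarrow> sg (Suc j) \<le> ak k)"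
    using sS k0m ak_mono by (auto split: if_splits)
qed

lemma inv_upto: "(\<And>j. j < m \<Longrightarrow> sg j + S j < ak K) \<Longrightarrow> invq m"
proof (induction m)
  case 0 show ?case by (rule invq0)
next
  case (Suc m) then show ?case using step(4)[of m K] by auto
qed

lemma Sd_eq: "Sd m = pk ` {..<m}"
  by (induction m) (auto simp: sim_0 sim_Suc lessThan_Suc)

lemma card_inj_plus:
  assumes "inj_on f I" "f ` I \<subseteq> W - {c}" "c \<in> W" "finite W"
  shows "card I + 1 \<le> card W"
proof -
  have "card I = card (f ` I)" using assms(1) by (simp add: card_image)
  also have "\<dots> \<le> card (W - {c})" using assms by (intro card_mono) auto
  also have "\<dots> = card W - 1" using assms by simp
  finally have le: "card I \<le> card W - 1" .
  have "card W > 0" using assms(3,4) card_gt_0_iff by blast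
  then show ?thesis using le by linarith
qed

lemma sg_sum:
  "(\<And>i. r \<le> i \<Longrightarrow> i < j \<Longrightarrow> sg (Suc i) = sg i + S i) \<Longrightarrow> r \<le> j \<Longrightarrow>
     sg j = sg r + (\<Sum>i\<in>{r..<j}. S i)"
proof (induction j)
  case 0 then show ?case by simp
next
  case (Suc j)
  show ?case
  proof (cases "r = Suc j")
    case True then show ?thesis by simp
  next
    case False
    then have rj: "r \<le> j" using Suc.prems(2) by simp
    have pr: "\<And>i. r \<le> i \<Longrightarrow> i < j \<Longrightarrow> sg (Suc i) = sg i + S i"
    proof -
      fix i assume "r \<le> i" "i < j"
      then show "sg (Suc i) = sg i + S i" using Suc.prems(1)[of i] by linarith
    qed
    have ih: "sg j = sg r + (\<Sum>i\<in>{r..<j}. S i)" using Suc.IH[OF pr rj] .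
    have sj: "sg (Suc j) = sg j + S j" using Suc.prems(1)[of j] rj by linarith
    have "(\<Sum>i\<in>{r..<Suc j}. S i) = (\<Sum>i\<in>{r..<j}. S i) + S j"
      using rj by (rule sum.atLeastLessThan_Suc)
    then show ?thesis using ih sj by linarith
  qed
qed

theorem window:
  assumes c: "is_cust n c" "\<And>m. c \<notin> Sd m"
    and Sb: "\<And>j. j \<le> J \<Longrightarrow> S j \<le> Sb" and big: "dl c + Sb \<le> ak K" and J: "n + 1 + K \<le> J"
  shows "(\<exists>L. L \<le> J \<and> L + 1 \<le> card {c'. is_cust n c' \<and> dl c' \<le> dl c} \<and> dl c \<le> (\<Sum>j<L. S j)) \<or>
         (\<exists>t0 u L. 0 \<le> t0 \<and> t0 + dn \<le> dl c \<and> u + L \<le> J \<and>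
             L \<le> card {k. t0 \<le> ak k \<and> ak k + dn \<le> dl c} \<and> dl c - t0 \<le> (\<Sum>j\<in>{u..<u+L}. S j))"
proof -
  define D where "D = dl c"
  have Dpos: "0 < D" unfolding D_def by (rule dl_pos)
  have Sb0: "0 \<le> Sb" using Sb[of 0] S_nn[of 0] by auto
  have DK: "D \<le> ak K" using big Sb0 unfolding D_def by auto
  have ex: "\<exists>m\<le>J. D \<le> sg m"
  proof (rule ccontr)
    assume "\<not> ?thesis"
    then have lt: "\<And>m. m \<le> J \<Longrightarrow> sg m < D" by force
    have e: "\<And>j. j \<le> J \<Longrightarrow> sg j + S j < ak K"
    proof -
      fix j assume j: "j \<le> J"
      have "sg j < D" using lt[OF j] .
      moreover have "S j \<le> Sb" using Sb[OF j] .
      ultimately show "sg j + S j < ak K" using big unfolding D_def by simp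
    qed
    have iv: "\<And>j. j \<le> J \<Longrightarrow> invq j" by (rule inv_upto[of _ K]) (use e in auto)
    have pav: "\<And>j. j \<le> J \<Longrightarrow> pk j \<in> av (sg j) (Sd j)" using step(1) iv e by blast
    have inj: "inj_on pk {..J}"
    proof (rule inj_onI)
      fix i j assume ij: "i \<in> {..J}" "j \<in> {..J}" "pk i = pk j"
      show "i = j"
      proof (rule ccontr)
        assume "i \<noteq> j"
        then consider "i < j" | "j < i" by linarith
        then show False
        proof cases
          case 1
          then have "pk i \<in> Sd j" by (simp add: Sd_eq)
          then show False using pav[of j] ij by (auto simp: avail_def)
        next
          case 2
          then have "pk j \<in> Sd i" by (simp add: Sd_eq)
          then show False using pav[of i] ij by (auto simp: avail_def)
        qed
      qed
    qed
    have sub: "pk ` {..J} \<subseteq> {c. is_cust n c \<and> arr c < ak K}"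
    proof
      fix x assume "x \<in> pk ` {..J}"
      then obtain j where j: "j \<le> J" "x = pk j" by auto
      then show "x \<in> {c. is_cust n c \<and> arr c < ak K}"
        using pav[of j] lt[of j] DK by (auto simp: avail_def)
    qed
    have "J + 1 = card (pk ` {..J})" using inj by (simp add: card_image)
    also have "\<dots> \<le> card {c. is_cust n c \<and> arr c < ak K}"
      by (rule card_mono[OF cust_fin sub])
    also have "\<dots> \<le> n + 1 + K" by (rule cust_card)
    finally show False using J by simp
  qed
  define ms where "ms = (LEAST m. D \<le> sg m)"
  have ms1: "D \<le> sg ms" unfolding ms_def using ex by (metis LeastI)
  have msJ: "ms \<le> J" unfolding ms_def using ex by (meson Least_le order_trans)
  have ms2: "\<And>j. j < ms \<Longrightarrow> sg j < D" unfolding ms_def using not_less_Least by (metis not_le)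
  have ms0: "ms \<noteq> 0"
  proof
    assume "ms = 0"
    then have "sg ms = 0" by (simp add: sim_0)
    then show False using ms1 Dpos by simp
  qed
  then obtain q where q: "ms = Suc q" by (cases ms) auto
  have eK: "\<And>j. j < ms \<Longrightarrow> sg j + S j < ak K"
  proof -
    fix j assume j: "j < ms"
    have "sg j < D" using ms2[OF j] .
    moreover have "S j \<le> Sb" using Sb[of j] j msJ by simp
    ultimately show "sg j + S j < ak K" using big unfolding D_def by simp
  qed
  have iv: "\<And>j. j \<le> ms \<Longrightarrow> invq j" by (rule inv_upto[of _ K]) (use eK in auto)
  have pav: "\<And>j. j < ms \<Longrightarrow> pk j \<in> av (sg j) (Sd j)" using step(1) iv eK by (meson less_imp_le)
  have pmin: "\<And>j c'. j < ms \<Longrightarrow> c' \<in> av (sg j) (Sd j) \<Longrightarrow> dl (pk j) \<le> dl c'"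
    using step(2) iv eK by (meson less_imp_le)
  have ge: "\<And>j. j < ms \<Longrightarrow> sg j + S j \<le> sg (Suc j)" using step(3) iv eK by (meson less_imp_le)
  have idl: "\<And>j. j < ms \<Longrightarrow> sg (Suc j) \<noteq> sg j + S j \<Longrightarrow> av (sg j + S j) (Sd (Suc j)) = {} \<and>
        (\<forall>k. sg j + S j < ak k \<longrightarrow> sg (Suc j) \<le> ak k)"
    using step(5) iv eK by (meson less_imp_le)
  have sg0: "\<And>j. j \<le> ms \<Longrightarrow> 0 \<le> sg j" using iv by (auto simp: invq_def)
  have mono: "\<And>i j. i \<le> j \<Longrightarrow> j \<le> ms \<Longrightarrow> sg i \<le> sg j"
  proof -
    fix i j :: nat assume "i \<le> j" "j \<le> ms"
    then show "sg i \<le> sg j"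
    proof (induction j rule: dec_induct)
      case base then show ?case by simp
    next
      case (step j)
      then show ?case using ge[of j] S_nn[of j] by force
    qed
  qed
  have Sdmono: "\<And>i j. i \<le> j \<Longrightarrow> Sd i \<subseteq> Sd j" by (auto simp: Sd_eq)
  have pk_notin: "\<And>j. j < ms \<Longrightarrow> pk j \<notin> Sd j" using pav by (auto simp: avail_def)
  have pk_neq_c: "\<And>j. pk j \<noteq> c" using c(2)[of "Suc _"] by (auto simp: sim_Suc)
  have pk_inj: "inj_on pk {..<ms}"
  proof (rule inj_onI)
    fix i j assume ij: "i \<in> {..<ms}" "j \<in> {..<ms}" "pk i = pk j"
    show "i = j"
    proof (rule ccontr)
      assume "i \<noteq> j"
      then consider "i < j" | "j < i" by linarith
      then show False
      proof cases
        case 1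
        then have "pk i \<in> pk ` {..<j}" by simp
        then show False using pk_notin[of j] ij by (simp add: Sd_eq)
      next
        case 2
        then have "pk j \<in> pk ` {..<i}" by simp
        then show False using pk_notin[of i] ij by (simp add: Sd_eq)
      qed
    qed
  qed
  have b: "\<And>j. j < ms \<Longrightarrow> arr c \<le> sg j \<Longrightarrow> dl (pk j) \<le> D"
  proof -
    fix j assume j: "j < ms" "arr c \<le> sg j"
    have "c \<in> av (sg j) (Sd j)" using j c ms2[of j] by (auto simp: avail_def D_def)
    then show "dl (pk j) \<le> D" using pmin[OF j(1)] unfolding D_def by blast
  qed
  have cc: "\<And>j. j < q \<Longrightarrow> sg (Suc j) \<noteq> sg j + S j \<Longrightarrow> sg j + S j < arr c"
  proof (rule ccontr)
    fix j assume j: "j < q" "sg (Suc j) \<noteq> sg j + S j" "\<not> sg j + S j < arr c"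
    have "sg j + S j < D" using ge[of j] ms2[of "Suc j"] j q by force
    then have "c \<in> av (sg j + S j) (Sd (Suc j))" using j c by (auto simp: avail_def D_def)
    then show False using idl[of j] j q by auto
  qed
  have dq: "D \<le> sg q + S q"
  proof (cases "sg ms = sg q + S q")
    case True then show ?thesis using ms1 by simp
  next
    case False
    show ?thesis
    proof (rule ccontr)
      assume nd: "\<not> D \<le> sg q + S q"
      have idq: "av (sg q + S q) (Sd ms) = {} \<and> (\<forall>k. sg q + S q < ak k \<longrightarrow> sg ms \<le> ak k)"
        using idl[of q] False q by auto
      have "\<not> arr c \<le> sg q + S q"
      proof
        assume "arr c \<le> sg q + S q"
        then have "c \<in> av (sg q + S q) (Sd ms)" using nd c by (auto simp: avail_def D_def)
        then show False using idq by auto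
      qed
      then have lt: "sg q + S q < arr c" by simp
      have "0 \<le> sg q + S q" using sg0[of q] S_nn[of q] q by auto
      then obtain kc where kc: "c = Arr kc" using lt by (cases c) auto
      have "sg ms \<le> ak kc" using idq lt kc by auto
      moreover have "D = ak kc + dn" using kc by (simp add: D_def)
      ultimately show False using ms1 dn_pos by auto
    qed
  qed
  define W0 where "W0 = {c'. is_cust n c' \<and> dl c' \<le> D}"
  have W0fin: "finite W0"
  proof (rule finite_subset[OF _ cust_fin[of K]])
    show "W0 \<subseteq> {c. is_cust n c \<and> arr c < ak K}"
    proof
      fix x assume x: "x \<in> W0"
      have "arr x < dl x" using dn_pos nd_pos by (cases x) auto
      then show "x \<in> {c. is_cust n c \<and> arr c < ak K}" using x DK by (auto simp: W0_def)
    qed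
  qed
  define Wk where "Wk = (\<lambda>t0. {k. t0 \<le> ak k \<and> ak k + dn \<le> D})"
  have Wkfin: "\<And>t0. finite (Wk t0)"
  proof -
    fix t0
    show "finite (Wk t0)"
    proof (rule finite_subset)
      show "Wk t0 \<subseteq> {..<K}"
        using DK dn_pos by (auto simp: Wk_def simp flip: ak_less_iff)
    qed auto
  qed
  define R where "R = {j. (j < q \<and> sg (Suc j) \<noteq> sg j + S j) \<or> (j \<le> q \<and> D < dl (pk j))}"
  have Rfin: "finite R" by (rule finite_subset[of _ "{..q}"]) (auto simp: R_def)
  show ?thesis
  proof (cases "R = {}")
    case True
    have noidle: "\<And>i. 0 \<le> i \<Longrightarrow> i < q \<Longrightarrow> sg (Suc i) = sg i + S i" using True by (auto simp: R_def)
    have "sg q = sg 0 + (\<Sum>i\<in>{0..<q}. S i)" by (rule sg_sum) (use noidle in auto)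
    then have "D \<le> (\<Sum>i<ms. S i)" using dq q by (simp add: sim_0 atLeast0LessThan)
    moreover have "card {..<ms} + 1 \<le> card W0"
    proof (rule card_inj_plus[OF pk_inj _ _ W0fin])
      show "c \<in> W0" using c by (simp add: W0_def D_def)
      show "pk ` {..<ms} \<subseteq> W0 - {c}"
      proof
        fix x assume "x \<in> pk ` {..<ms}"
        then obtain j where j: "j < ms" "x = pk j" by auto
        have "\<not> D < dl (pk j)" using True j q by (auto simp: R_def)
        then show "x \<in> W0 - {c}" using pav[OF j(1)] j pk_neq_c by (auto simp: W0_def avail_def)
      qed
    qed
    ultimately show ?thesis using msJ unfolding W0_def D_def by auto
  next
    case False
    define r where "r = Max R"
    have rR: "r \<in> R" unfolding r_def using False Rfin by (rule Max_in[rotated])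
    have rmax: "\<And>j. j \<in> R \<Longrightarrow> j \<le> r" unfolding r_def using Rfin by simp
    have rq: "r \<le> q" using rR by (auto simp: R_def)
    have after: "\<And>j. r < j \<Longrightarrow> j \<le> q \<Longrightarrow> dl (pk j) \<le> D \<and> (j < q \<longrightarrow> sg (Suc j) = sg j + S j)"
      using rmax by (force simp: R_def)
    show ?thesis
    proof (cases "r < q \<and> sg (Suc r) \<noteq> sg r + S r")
      case True
      define t0 where "t0 = sg (Suc r)"
      have er: "sg r + S r < arr c" using cc True by auto
      have idr: "av (sg r + S r) (Sd (Suc r)) = {} \<and> (\<forall>k. sg r + S r < ak k \<longrightarrow> t0 \<le> ak k)"
        using idl[of r] True q unfolding t0_def by auto
      have er0: "0 \<le> sg r + S r" using sg0[of r] S_nn[of r] rq q by auto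
      then obtain kc where kc: "c = Arr kc" using er by (cases c) auto
      have t0c: "t0 \<le> ak kc" using idr er kc by auto
      have DD: "D = ak kc + dn" using kc by (simp add: D_def)
      have t00: "0 \<le> t0" unfolding t0_def using sg0[of "Suc r"] True q by auto
      have "sg q = sg (Suc r) + (\<Sum>i\<in>{Suc r..<q}. S i)"
        by (rule sg_sum) (use True after in auto)
      then have sumb: "D - t0 \<le> (\<Sum>i\<in>{Suc r..<Suc r + (q - r)}. S i)"
        using dq True unfolding t0_def by simp
      have "card {Suc r..q} \<le> card (Wk t0)"
      proof -
        have inj2: "inj_on pk {Suc r..q}" using pk_inj by (rule inj_on_subset) (use q in auto)
        have sub: "pk ` {Suc r..q} \<subseteq> Arr ` Wk t0"
        proof
          fix x assume "x \<in> pk ` {Suc r..q}"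
          then obtain j where j: "Suc r \<le> j" "j \<le> q" "x = pk j" by auto
          have jm: "j < ms" using j q by simp
          have pa: "pk j \<in> av (sg j) (Sd j)" using pav[OF jm] .
          have dlj: "dl (pk j) \<le> D" using after[of j] j by auto
          have "\<not> arr (pk j) \<le> sg r + S r"
          proof
            assume a: "arr (pk j) \<le> sg r + S r"
            have "pk j \<notin> Sd (Suc r)" using pa Sdmono[of "Suc r" j] j by (auto simp: avail_def)
            then have "\<not> sg r + S r < dl (pk j)" using idr a pa by (auto simp: avail_def)
            moreover have "sg r + S r \<le> sg j"
              using ge[of r] mono[of "Suc r" j] j q by force
            ultimately show False using pa by (auto simp: avail_def)
          qed
          then have lt: "sg r + S r < arr (pk j)" by simp
          then obtain k where k: "pk j = Arr k" using er0 by (cases "pk j") auto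
          have "k \<in> Wk t0" using lt idr k dlj by (auto simp: Wk_def)
          then show "x \<in> Arr ` Wk t0" using j k by auto
        qed
        have "card {Suc r..q} = card (pk ` {Suc r..q})" using inj2 by (simp add: card_image)
        also have "\<dots> \<le> card (Arr ` Wk t0)" by (rule card_mono[OF _ sub]) (use Wkfin in auto)
        also have "\<dots> = card (Wk t0)" by (rule card_image) (simp add: inj_on_def)
        finally show ?thesis .
      qed
      then have "q - r \<le> card (Wk t0)" by simp
      moreover have "Suc r + (q - r) \<le> J" using msJ q rq by simp
      ultimately have "0 \<le> t0 \<and> t0 + dn \<le> dl c \<and> Suc r + (q - r) \<le> J \<and>
          q - r \<le> card {k. t0 \<le> ak k \<and> ak k + dn \<le> dl c} \<and>
          dl c - t0 \<le> (\<Sum>j\<in>{Suc r..<Suc r + (q - r)}. S j)"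
        using t00 t0c DD sumb unfolding Wk_def D_def by simp
      then show ?thesis by blast
    next
      case False
      then have Br: "D < dl (pk r)" using rR by (auto simp: R_def)
      define t0 where "t0 = sg r"
      have rms: "r < ms" using rq q by simp
      have sr: "sg r < arr c" using b[OF rms] Br by force
      have t00: "0 \<le> t0" unfolding t0_def using sg0[of r] rms by auto
      then obtain kc where kc: "c = Arr kc" using sr unfolding t0_def by (cases c) auto
      have DD: "D = ak kc + dn" using kc by (simp add: D_def)
      have "sg q = sg r + (\<Sum>i\<in>{r..<q}. S i)"
      proof (rule sg_sum)
        fix i assume "r \<le> i" "i < q"
        then show "sg (Suc i) = sg i + S i" using False after[of i] by (cases "i = r") auto
      qed (rule rq)
      then have sumb: "D - t0 \<le> (\<Sum>i\<in>{r..<r + (Suc q - r)}. S i)"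
        using dq rq unfolding t0_def by (simp add: Suc_diff_le)
      have "card {Suc r..q} + 1 \<le> card (Arr ` Wk t0)"
      proof (rule card_inj_plus)
        show "inj_on pk {Suc r..q}" using pk_inj by (rule inj_on_subset) (use q in auto)
        show "c \<in> Arr ` Wk t0" using kc sr DD unfolding t0_def Wk_def by auto
        show "finite (Arr ` Wk t0)" using Wkfin by auto
        show "pk ` {Suc r..q} \<subseteq> Arr ` Wk t0 - {c}"
        proof
          fix x assume "x \<in> pk ` {Suc r..q}"
          then obtain j where j: "Suc r \<le> j" "j \<le> q" "x = pk j" by auto
          have jm: "j < ms" using j q by simp
          have pa: "pk j \<in> av (sg j) (Sd j)" using pav[OF jm] .
          have dlj: "dl (pk j) \<le> D" using after[of j] j by auto
          have "\<not> arr (pk j) \<le> sg r"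
          proof
            assume a: "arr (pk j) \<le> sg r"
            have "pk j \<notin> Sd r" using pa Sdmono[of r j] j by (auto simp: avail_def)
            moreover have "sg r \<le> sg j" using mono[of r j] j q by simp
            ultimately have "pk j \<in> av (sg r) (Sd r)" using pa a by (auto simp: avail_def)
            then have "dl (pk r) \<le> dl (pk j)" using pmin[OF rms] by blast
            then show False using Br dlj by simp
          qed
          then have lt: "sg r < arr (pk j)" by simp
          then obtain k where k: "pk j = Arr k" using sg0[of r] rms by (cases "pk j") auto
          have "k \<in> Wk t0" using lt k dlj unfolding t0_def Wk_def by auto
          then show "x \<in> Arr ` Wk t0 - {c}" using j k pk_neq_c by auto
        qed
      qed
      moreover have "card (Arr ` Wk t0) = card (Wk t0)" by (rule card_image) (simp add: inj_on_def)
      ultimately have "Suc q - r \<le> card (Wk t0)" using rq by simp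
      moreover have "r + (Suc q - r) \<le> J" using msJ q rq by simp
      ultimately have "0 \<le> t0 \<and> t0 + dn \<le> dl c \<and> r + (Suc q - r) \<le> J \<and>
          Suc q - r \<le> card {k. t0 \<le> ak k \<and> ak k + dn \<le> dl c} \<and>
          dl c - t0 \<le> (\<Sum>j\<in>{r..<r + (Suc q - r)}. S j)"
        using t00 sr kc DD sumb unfolding Wk_def D_def t0_def by simp
      then show ?thesis by blast
    qed
  qed
qed

end

context qd begin

lemma card_Win0:
  assumes DK: "D < ak K + dn"
  shows "card {c'. is_cust n c' \<and> dl c' \<le> D} \<le> (if real n * d \<le> D then n + 1 else 0) + card {k. ak k + dn \<le> D}"
proof -
  have sub: "{c'. is_cust n c' \<and> dl c' \<le> D} \<subseteq> (if real n * d \<le> D then Init ` {..n} else {}) \<union> Arr ` {k. ak k + dn \<le> D}"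
  proof
    fix x assume "x \<in> {c'. is_cust n c' \<and> dl c' \<le> D}"
    then show "x \<in> (if real n * d \<le> D then Init ` {..n} else {}) \<union> Arr ` {k. ak k + dn \<le> D}"
      by (cases x) (auto simp: is_cust_def)
  qed
  have fin: "finite {k. ak k + dn \<le> D}"
  proof (rule finite_subset[of _ "{..<K}"])
    show "{k. ak k + dn \<le> D} \<subseteq> {..<K}"
    proof
      fix k assume "k \<in> {k. ak k + dn \<le> D}"
      then have "ak k < ak K" using DK by simp
      then show "k \<in> {..<K}" by (simp add: ak_less_iff)
    qed
  qed auto
  have "card {c'. is_cust n c' \<and> dl c' \<le> D} \<le> card ((if real n * d \<le> D then Init ` {..n} else {}) \<union> Arr ` {k. ak k + dn \<le> D})"
    by (rule card_mono[OF _ sub]) (use fin in auto)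
  also have "\<dots> \<le> card (if real n * d \<le> D then Init ` {..n} else {}) + card (Arr ` {k. ak k + dn \<le> D})"
    by (rule card_Un_le)
  also have "\<dots> \<le> (if real n * d \<le> D then n + 1 else 0) + card {k. ak k + dn \<le> D}"
    using card_image_le[of "{..n}" Init] card_image_le[OF fin, of Arr] by auto
  finally show ?thesis .
qed

lemma no_early_loss:
  assumes H1: "\<And>t0 x. 0 \<le> t0 \<Longrightarrow> t0 \<le> x \<Longrightarrow> x \<le> real n * tau \<Longrightarrow>
        real (card {k. t0 \<le> ak k \<and> ak k \<le> x}) \<le> lam0 * (x - t0) + eta * real n"
    and H2: "\<And>u L. u + L \<le> J \<Longrightarrow> (\<Sum>j\<in>{u..<u+L}. S j) \<le> real L / mu0 + eta * real n"
    and H3: "\<And>j. j \<le> J \<Longrightarrow> S j \<le> Sb" "real n * tau + Sb \<le> ak K" "n + 1 + K \<le> J"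
    and P: "0 < mu0" "mu0 < lam0" "mu0 * eta < mu0 * d - 1"
       "(lam0 - mu0) * tau + eta * (lam0 + 1 + mu0) \<le> lam0 * d - 1" "real n * (d - eta) \<le> dn" "0 \<le> eta"
    and c: "is_cust n c" "\<And>m. c \<notin> Sd m"
  shows "real n * tau \<le> dl c"
proof (rule ccontr)
  assume "\<not> ?thesis"
  then have DT: "dl c < real n * tau" by simp
  define D where "D = dl c"
  have Dpos: "0 < D" unfolding D_def by (rule dl_pos)
  have n0: "0 < real n" using nd_pos by (simp add: zero_less_mult_iff)
  have Sb0: "0 \<le> Sb" using H3(1)[of 0] S_nn[of 0] by auto
  have big: "dl c + Sb \<le> ak K" using DT H3(2) by simp
  have mul1: "\<And>L. D \<le> real L / mu0 + eta * real n \<Longrightarrow> mu0 * D \<le> real L + mu0 * eta * real n"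
  proof -
    fix L assume "D \<le> real L / mu0 + eta * real n"
    then have "mu0 * D \<le> mu0 * (real L / mu0 + eta * real n)" using P(1) by (simp add: mult_left_mono)
    moreover have "mu0 * (real L / mu0 + eta * real n) = real L + mu0 * eta * real n"
      using P(1) by (simp add: distrib_left)
    ultimately show "mu0 * D \<le> real L + mu0 * eta * real n" by simp
  qed
  have dnk: "lam0 * (real n * (d - eta)) \<le> lam0 * dn" using P(2,1) P(5) by (simp add: mult_left_mono)
  have Ptau: "real n * ((lam0 - mu0) * tau + eta * (lam0 + 1 + mu0)) \<le> real n * (lam0 * d - 1)"
    using P(4) n0 by (simp add: mult_left_mono)
  have DTm: "(lam0 - mu0) * D < (lam0 - mu0) * (real n * tau)" using DT P(1,2) unfolding D_def by simp
  from window[OF c H3(1) big H3(3)]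
  show False
  proof
    assume "\<exists>L. L \<le> J \<and> L + 1 \<le> card {c'. is_cust n c' \<and> dl c' \<le> dl c} \<and> dl c \<le> (\<Sum>j<L. S j)"
    then obtain L where L: "L \<le> J" "L + 1 \<le> card {c'. is_cust n c' \<and> dl c' \<le> D}" "D \<le> (\<Sum>j<L. S j)"
      unfolding D_def by blast
    have "(\<Sum>j<L. S j) = (\<Sum>j\<in>{0..<0+L}. S j)" by (simp add: atLeast0LessThan)
    also have "\<dots> \<le> real L / mu0 + eta * real n" using H2[of 0 L] L(1) by simp
    finally have m: "mu0 * D \<le> real L + mu0 * eta * real n" using L(3) mul1 by simp
    have DK: "D < ak K + dn" using big Sb0 dn_pos unfolding D_def by simp
    have cw: "L + 1 \<le> (if real n * d \<le> D then n + 1 else 0) + card {k. ak k + dn \<le> D}"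
      using L(2) card_Win0[OF DK] by simp
    show False
    proof (cases "D < dn")
      case True
      have "{k. ak k + dn \<le> D} = {}" using True ak_pos by (auto simp: not_le intro: add_pos_pos) (smt (verit) ak_pos)
      then have cw': "L + 1 \<le> (if real n * d \<le> D then n + 1 else 0)" using cw by simp
      then have nd: "real n * d \<le> D" and Ln: "L \<le> n" by (auto split: if_splits)
      have "mu0 * (real n * d) \<le> mu0 * D" using nd P(1) by (simp add: mult_left_mono)
      moreover have "real L \<le> real n" using Ln by simp
      moreover have "real n * (mu0 * eta) < real n * (mu0 * d - 1)" using P(3) n0 by simp
      ultimately show False using m by (simp add: algebra_simps)
    next
      case False
      have seq: "{k. ak k + dn \<le> D} = {k. 0 \<le> ak k \<and> ak k \<le> D - dn}"
        using ak_pos by (auto intro: less_imp_le)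
      have "real (card {k. ak k + dn \<le> D}) \<le> lam0 * (D - dn - 0) + eta * real n"
        unfolding seq by (rule H1) (use False DT dn_pos in \<open>auto simp: D_def\<close>)
      then have "real L \<le> real n + lam0 * (D - dn) + eta * real n"
        using cw by (auto split: if_splits)
      then have "mu0 * D \<le> real n + lam0 * D - lam0 * dn + eta * real n + mu0 * eta * real n"
        using m by (simp add: algebra_simps)
      then show False using dnk Ptau DTm by (simp add: algebra_simps)
    qed
  next
    assume "\<exists>t0 u L. 0 \<le> t0 \<and> t0 + dn \<le> dl c \<and> u + L \<le> J \<and>
             L \<le> card {k. t0 \<le> ak k \<and> ak k + dn \<le> dl c} \<and> dl c - t0 \<le> (\<Sum>j\<in>{u..<u+L}. S j)"
    then obtain t0 u L where T: "0 \<le> t0" "t0 + dn \<le> D" "u + L \<le> J"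
        "L \<le> card {k. t0 \<le> ak k \<and> ak k + dn \<le> D}" "D - t0 \<le> (\<Sum>j\<in>{u..<u+L}. S j)"
      unfolding D_def by blast
    have "D - t0 \<le> real L / mu0 + eta * real n" using T(5) H2[OF T(3)] by simp
    then have "mu0 * (D - t0) \<le> mu0 * (real L / mu0 + eta * real n)" using P(1) by (simp add: mult_left_mono)
    moreover have "mu0 * (real L / mu0 + eta * real n) = real L + mu0 * eta * real n"
      using P(1) by (simp add: distrib_left)
    ultimately have m: "mu0 * (D - t0) \<le> real L + mu0 * eta * real n" by simp
    have seq: "{k. t0 \<le> ak k \<and> ak k + dn \<le> D} = {k. t0 \<le> ak k \<and> ak k \<le> D - dn}" by auto
    have "real (card {k. t0 \<le> ak k \<and> ak k + dn \<le> D}) \<le> lam0 * (D - dn - t0) + eta * real n"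
      unfolding seq by (rule H1) (use T DT dn_pos in \<open>auto simp: D_def\<close>)
    then have "real L \<le> lam0 * (D - dn - t0) + eta * real n" using T(4) by linarith
    then have "mu0 * D - mu0 * t0 \<le> lam0 * D - lam0 * dn - lam0 * t0 + eta * real n + mu0 * eta * real n"
      using m by (simp add: algebra_simps)
    moreover have "mu0 * t0 \<le> lam0 * t0" using T(1) P(2) by (simp add: mult_right_mono)
    ultimately show False using dnk Ptau DTm n0 by (simp add: algebra_simps)
  qed
qed

end

lemma grid_unif:
  fixes X :: "nat \<Rightarrow> real"
  assumes mono: "\<And>k. X k \<le> X (Suc k)"
    and grid: "\<And>i. i \<le> N \<Longrightarrow> \<bar>X (i*w) - (real (i*w) + 1) / l\<bar> \<le> e"
    and w: "1 \<le> w" and l: "0 < l"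
    and k: "k < N * w"
  shows "\<bar>X k - (real k + 1) / l\<bar> \<le> real w / l + e"
proof -
  have monoX: "\<And>a b. a \<le> b \<Longrightarrow> X a \<le> X b"
    using mono by (rule incseq_SucI[unfolded incseq_def, rule_format])
  define i where "i = k div w"
  have g1: "i * w \<le> k" unfolding i_def by (simp add: div_times_less_eq_dividend)
  have km: "k = i * w + k mod w" unfolding i_def by simp
  have "k mod w < w" using w by simp
  then have g2: "k < (i + 1) * w" using km by (simp add: algebra_simps)
  have iN: "i + 1 \<le> N"
  proof -
    have "i < N" using k w unfolding i_def by (simp add: div_less_iff_less_mult)
    then show ?thesis by simp
  qed
  have lo: "X (i*w) \<le> X k" using g1 monoX by simp
  have hi: "X k \<le> X ((i+1)*w)" using g2 monoX by simp
  have G1: "\<bar>X (i*w) - (real (i*w) + 1) / l\<bar> \<le> e" using grid iN by simp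
  have G2: "\<bar>X ((i+1)*w) - (real ((i+1)*w) + 1) / l\<bar> \<le> e" using grid[OF iN] by simp
  have q1: "real k \<le> real ((i+1)*w)" by (rule of_nat_mono) (use g2 in linarith)
  have q2: "real (i*w) \<le> real k" by (rule of_nat_mono) (use g1 in linarith)
  have q3: "real ((i+1)*w) = real (i*w) + real w" by (simp add: algebra_simps)
  have r1: "real (i*w) + 1 \<ge> real k + 1 - real w" using q1 q3 by linarith
  have r2: "real ((i+1)*w) + 1 \<le> real k + 1 + real w" using q2 q3 by linarith
  have d1: "(real (i*w) + 1) / l \<ge> (real k + 1) / l - real w / l"
    using r1 l by (simp add: divide_right_mono diff_divide_distrib[symmetric])
  have d2: "(real ((i+1)*w) + 1) / l \<le> (real k + 1) / l + real w / l"
    using r2 l by (simp add: divide_right_mono add_divide_distrib[symmetric])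
  show ?thesis using lo hi G1 G2 d1 d2 by (simp add: abs_le_iff)
qed

lemma card_nat_interval:
  fixes S :: "nat set"
  assumes "\<And>k. k \<in> S \<Longrightarrow> a \<le> real k \<and> real k \<le> b"
  shows "real (card S) \<le> max 0 (b - a + 1)"
proof (cases "S = {}")
  case True then show ?thesis by simp
next
  case False
  then obtain k0 where k0: "k0 \<in> S" by auto
  have b0: "0 \<le> b" using assms[OF k0] by linarith
  define lo where "lo = nat \<lceil>a\<rceil>"
  define hi where "hi = nat \<lfloor>b\<rfloor>"
  have sub: "S \<subseteq> {lo..hi}"
  proof
    fix k assume kS: "k \<in> S"
    have "a \<le> real k" "real k \<le> b" using assms[OF kS] by auto
    then show "k \<in> {lo..hi}" unfolding lo_def hi_def
      by (auto simp: le_nat_iff ceiling_le_iff le_floor_iff)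
  qed
  have "card S \<le> card {lo..hi}" by (rule card_mono[OF _ sub]) simp
  also have "\<dots> = Suc hi - lo" by simp
  finally have c: "real (card S) \<le> real (Suc hi - lo)" by simp
  have "lo \<le> hi" using sub k0 by auto
  then have "real (Suc hi - lo) = real hi + 1 - real lo" by (simp add: of_nat_diff)
  moreover have "real hi \<le> b" unfolding hi_def using b0 by simp
  moreover have "a \<le> real lo" unfolding lo_def by (simp add: real_nat_ceiling_ge)
  ultimately show ?thesis using c by linarith
qed

context qd begin

lemma no_loss_grid:
  fixes lam mu e lam0 mu0 eta tau :: real and w N N2 :: nat
  assumes lm: "0 < lam" "0 < mu" and w: "1 \<le> w" and e0: "0 \<le> e"
    and GA: "\<And>i. i \<le> N \<Longrightarrow> \<bar>ak (i*w) - (real (i*w) + 1) / lam\<bar> \<le> e"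
    and GS: "\<And>i. i \<le> N2 \<Longrightarrow> \<bar>(\<Sum>l\<le>i*w. S l) - (real (i*w) + 1) / mu\<bar> \<le> e"
    and n1: "n + 1 \<le> N * w" and n1': "n + N * w + 1 \<le> N2 * w"
    and n2: "real n * tau + (1 / mu + 2 * (real w / mu + e)) \<le> real (N * w) / lam - (real w / lam + e)"
    and n3: "\<bar>lam - lam0\<bar> * (real n * \<bar>tau\<bar>) + 2 * lam * (real w / lam + e) + 1 \<le> eta * real n"
    and n4: "real (n + N * w) * \<bar>1 / mu - 1 / mu0\<bar> + 2 * (real w / mu + e) \<le> eta * real n"
    and P: "0 < mu0" "mu0 < lam0" "mu0 * eta < mu0 * d - 1"
       "(lam0 - mu0) * tau + eta * (lam0 + 1 + mu0) \<le> lam0 * d - 1" "real n * (d - eta) \<le> dn" "0 \<le> eta"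
    and c: "is_cust n c" "\<And>m. c \<notin> Sd m"
  shows "real n * tau \<le> dl c"
proof -
  define ea where "ea = real w / lam + e"
  define es where "es = real w / mu + e"
  have es0: "0 \<le> es" unfolding es_def using lm e0 by simp
  have unifA: "\<And>k. k < N * w \<Longrightarrow> \<bar>ak k - (real k + 1) / lam\<bar> \<le> ea"
    unfolding ea_def by (rule grid_unif[where X = ak, OF _ GA w lm(1)]) (auto intro: ak_mono)
  have unifQ: "\<And>k. k < N2 * w \<Longrightarrow> \<bar>(\<Sum>l\<le>k. S l) - (real k + 1) / mu\<bar> \<le> es"
    unfolding es_def by (rule grid_unif[where X = "\<lambda>k. \<Sum>l\<le>k. S l", OF _ GS w lm(2)])
      (auto simp: S_nn)
  have unifP: "\<And>j. j \<le> N2 * w \<Longrightarrow> \<bar>(\<Sum>l<j. S l) - real j / mu\<bar> \<le> es"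
  proof -
    fix j assume j: "j \<le> N2 * w"
    show "\<bar>(\<Sum>l<j. S l) - real j / mu\<bar> \<le> es"
    proof (cases j)
      case 0 then show ?thesis using es0 by simp
    next
      case (Suc k)
      then have "k < N2 * w" using j by simp
      from unifQ[OF this] show ?thesis using Suc by (simp add: lessThan_Suc_atMost add.commute)
    qed
  qed
  define J where "J = n + N * w"
  define K where "K = N * w - 1"
  define Sb where "Sb = 1 / mu + 2 * es"
  have Nw1: "1 \<le> N * w" using n1 by linarith
  have JN2: "J + 1 \<le> N2 * w" using n1' unfolding J_def by simp
  have H3a: "\<And>j. j \<le> J \<Longrightarrow> S j \<le> Sb"
  proof -
    fix j assume j: "j \<le> J"
    have a: "\<bar>(\<Sum>l<Suc j. S l) - real (Suc j) / mu\<bar> \<le> es" by (rule unifP) (use JN2 j in simp)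
    have b: "\<bar>(\<Sum>l<j. S l) - real j / mu\<bar> \<le> es" by (rule unifP) (use JN2 j in simp)
    have "S j = (\<Sum>l<Suc j. S l) - (\<Sum>l<j. S l)" by simp
    moreover have "real (Suc j) / mu = real j / mu + 1 / mu" by (simp add: add_divide_distrib)
    ultimately show "S j \<le> Sb" using a b unfolding Sb_def by (simp add: abs_le_iff)
  qed
  have H3b: "real n * tau + Sb \<le> ak K"
  proof -
    have "K < N * w" using Nw1 unfolding K_def by simp
    from unifA[OF this] have "(real K + 1) / lam - ea \<le> ak K" by (simp add: abs_le_iff)
    moreover have "real K + 1 = real (N * w)" using Nw1 unfolding K_def by (simp add: of_nat_diff)
    ultimately show ?thesis using n2 unfolding Sb_def es_def ea_def by simp
  qed
  have H3c: "n + 1 + K \<le> J" using Nw1 unfolding J_def K_def by simp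
  have H2: "\<And>u L. u + L \<le> J \<Longrightarrow> (\<Sum>j\<in>{u..<u+L}. S j) \<le> real L / mu0 + eta * real n"
  proof -
    fix u L assume uL: "u + L \<le> J"
    have split: "(\<Sum>j<u+L. S j) = (\<Sum>j<u. S j) + (\<Sum>j\<in>{u..<u+L}. S j)"
      by (simp add: atLeast0LessThan[symmetric] sum.atLeastLessThan_concat)
    have a: "\<bar>(\<Sum>l<u+L. S l) - real (u+L) / mu\<bar> \<le> es" by (rule unifP) (use uL JN2 in simp)
    have b: "\<bar>(\<Sum>l<u. S l) - real u / mu\<bar> \<le> es" by (rule unifP) (use uL JN2 in simp)
    have "real (u+L) / mu = real u / mu + real L / mu" by (simp add: add_divide_distrib)
    then have s1: "(\<Sum>j\<in>{u..<u+L}. S j) \<le> real L / mu + 2 * es"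
      using a b split by (simp add: abs_le_iff)
    have "real L / mu - real L / mu0 = real L * (1 / mu - 1 / mu0)" by (simp add: algebra_simps)
    also have "\<dots> \<le> real L * \<bar>1 / mu - 1 / mu0\<bar>" by (simp add: mult_left_mono)
    also have "\<dots> \<le> real J * \<bar>1 / mu - 1 / mu0\<bar>" using uL by (simp add: mult_right_mono)
    finally have "real L / mu \<le> real L / mu0 + real J * \<bar>1 / mu - 1 / mu0\<bar>" by simp
    then show "(\<Sum>j\<in>{u..<u+L}. S j) \<le> real L / mu0 + eta * real n"
      using s1 n4 unfolding J_def es_def by simp
  qed
  have Sbpos: "0 < Sb"
  proof -
    have "0 < 1 / mu" using lm by simp
    then show ?thesis unfolding Sb_def using es0 by linarith
  qed
  have H1: "\<And>t0 x. 0 \<le> t0 \<Longrightarrow> t0 \<le> x \<Longrightarrow> x \<le> real n * tau \<Longrightarrow>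
        real (card {k. t0 \<le> ak k \<and> ak k \<le> x}) \<le> lam0 * (x - t0) + eta * real n"
  proof -
    fix t0 x assume t0: "0 \<le> t0" and tx: "t0 \<le> x" and xT: "x \<le> real n * tau"
    have mem: "\<And>k. k \<in> {k. t0 \<le> ak k \<and> ak k \<le> x} \<Longrightarrow>
        lam * (t0 - ea) - 1 \<le> real k \<and> real k \<le> lam * (x + ea) - 1"
    proof -
      fix k assume "k \<in> {k. t0 \<le> ak k \<and> ak k \<le> x}"
      then have k1: "t0 \<le> ak k" "ak k \<le> x" by auto
      have "ak k < ak K" using k1 xT H3b Sbpos by simp
      then have "k < K" by (simp add: ak_less_iff)
      then have "k < N * w" unfolding K_def by simp
      from unifA[OF this] have u: "\<bar>ak k - (real k + 1) / lam\<bar> \<le> ea" .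
      have "(real k + 1) / lam \<le> x + ea" using u k1 by (simp add: abs_le_iff)
      then have h1: "real k + 1 \<le> (x + ea) * lam" using lm by (simp add: pos_divide_le_eq)
      have "t0 - ea \<le> (real k + 1) / lam" using u k1 by (simp add: abs_le_iff)
      then have h2: "(t0 - ea) * lam \<le> real k + 1" using lm by (simp add: pos_le_divide_eq)
      show "lam * (t0 - ea) - 1 \<le> real k \<and> real k \<le> lam * (x + ea) - 1"
        using h1 h2 by (simp add: mult.commute)
    qed
    have "real (card {k. t0 \<le> ak k \<and> ak k \<le> x}) \<le> max 0 ((lam * (x + ea) - 1) - (lam * (t0 - ea) - 1) + 1)"
      by (rule card_nat_interval) (use mem in blast)
    also have "\<dots> = lam * (x - t0) + 2 * lam * ea + 1"
    proof -
      have "0 \<le> lam * (x - t0)" using lm tx by simp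
      moreover have "0 \<le> lam * ea" using lm e0 unfolding ea_def by simp
      ultimately show ?thesis by (simp add: algebra_simps)
    qed
    also have "\<dots> \<le> lam0 * (x - t0) + eta * real n"
    proof -
      have "lam * (x - t0) - lam0 * (x - t0) = (lam - lam0) * (x - t0)" by (simp add: algebra_simps)
      also have "\<dots> \<le> \<bar>lam - lam0\<bar> * (x - t0)" using tx by (simp add: mult_right_mono)
      also have "\<dots> \<le> \<bar>lam - lam0\<bar> * (real n * \<bar>tau\<bar>)"
      proof (rule mult_left_mono)
        have "real n * tau \<le> real n * \<bar>tau\<bar>" by (simp add: mult_left_mono)
        then show "x - t0 \<le> real n * \<bar>tau\<bar>" using xT t0 by linarith
      qed simp
      finally show ?thesis using n3 unfolding ea_def by simp
    qed
    finally show "real (card {k. t0 \<le> ak k \<and> ak k \<le> x}) \<le> lam0 * (x - t0) + eta * real n" .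
  qed
  show ?thesis by (rule no_early_loss[OF H1 H2 H3a H3b H3c P c]) auto
qed

end

lemma (in prob_space) indep_sets_reindex:
  assumes ind: "indep_sets F (f ` I)" and inj: "inj_on f I"
  shows "indep_sets (\<lambda>i. F (f i)) I"
  unfolding indep_sets_def
proof (intro conjI ballI allI impI)
  fix i assume "i \<in> I"
  then show "F (f i) \<subseteq> events" using ind by (auto simp: indep_sets_def)
next
  fix J A assume J: "J \<subseteq> I" "J \<noteq> {}" "finite J" and A: "A \<in> Pi J (\<lambda>i. F (f i))"
  define A' where "A' = (\<lambda>y. A (the_inv_into J f y))"
  have injJ: "inj_on f J" using inj J(1) by (rule inj_on_subset)
  have A'f: "\<And>j. j \<in> J \<Longrightarrow> A' (f j) = A j" unfolding A'_def using injJ by (simp add: the_inv_into_f_f)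
  have "A' \<in> Pi (f ` J) F" using A A'f by auto
  then have "prob (\<Inter>y\<in>f ` J. A' y) = (\<Prod>y\<in>f ` J. prob (A' y))"
    using ind J unfolding indep_sets_def by (metis finite_imageI image_is_empty image_mono)
  moreover have "(\<Inter>y\<in>f ` J. A' y) = (\<Inter>j\<in>J. A j)" using A'f by auto
  moreover have "(\<Prod>y\<in>f ` J. prob (A' y)) = (\<Prod>j\<in>J. prob (A j))"
    using injJ A'f by (simp add: prod.reindex)
  ultimately show "prob (\<Inter>j\<in>J. A j) = (\<Prod>j\<in>J. prob (A j))" by simp
qed

lemma (in prob_space) indep_vars_reindex:
  assumes ind: "indep_vars M' X (f ` I)" and inj: "inj_on f I"
  shows "indep_vars (\<lambda>i. M' (f i)) (\<lambda>i. X (f i)) I"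
  using ind unfolding indep_vars_def2
  by (auto intro: indep_sets_reindex[OF _ inj, where F = "\<lambda>i. {X i -` A \<inter> space M |A. A \<in> sets (M' i)}", simplified])

lemma (in prob_space) sum_exp_dev:
  assumes ind: "indep_vars (\<lambda>_. borel) X {..k}"
    and dist: "\<And>i. distributed M lborel (X i) (exponential_density l)"
    and l: "0 < l" and a: "0 < a"
  shows "prob {x\<in>space M. a \<le> \<bar>(\<Sum>i\<le>k. X i x) - (real k + 1) / l\<bar>} \<le> (real k + 1) / (l^2 * a^2)"
proof -
  have D: "distributed M lborel (\<lambda>x. \<Sum>i\<in>{..k}. X i x) (erlang_density (card {..k} - 1) l)"
    by (rule exponential_distributed_sum) (use ind dist l in auto)
  then have D': "distributed M lborel (\<lambda>x. \<Sum>i\<le>k. X i x) (erlang_density k l)" by simp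
  have rv: "random_variable borel (\<lambda>x. \<Sum>i\<le>k. X i x)"
    using distributed_measurable[OF D'] by simp
  have int2: "integrable M (\<lambda>x. (\<Sum>i\<le>k. X i x) ^ 2)"
    by (rule erlang_ith_moment_integrable[OF l D'])
  have ex: "expectation (\<lambda>x. \<Sum>i\<le>k. X i x) = (real k + 1) / l"
    using erlang_ith_moment[OF l D', of 1] by (simp add: add.commute)
  have var: "variance (\<lambda>x. \<Sum>i\<le>k. X i x) = (real k + 1) / l^2"
    using erlang_distributed_variance[OF l D'] by (simp add: add.commute)
  have "prob {x\<in>space M. \<bar>(\<Sum>i\<le>k. X i x) - expectation (\<lambda>x. \<Sum>i\<le>k. X i x)\<bar> \<ge> a}
      \<le> variance (\<lambda>x. \<Sum>i\<le>k. X i x) / a^2"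
    by (rule Chebyshev_inequality[OF rv int2 a])
  then show ?thesis using ex var by (simp add: field_simps)
qed

lemma term_bound:
  fixes l l0 th :: real and n w i N2 :: nat
  assumes l0: "0 < l0" and l: "l0 / 2 \<le> l" and th: "0 < th" and thn: "1 \<le> th * real n"
    and w: "real w \<le> 2 * th * real n" and i: "i \<le> N2"
  shows "(real (i * w) + 1) / (l^2 * (th * real n)^2) \<le> 4 * (2 * real N2 + 1) / (l0^2 * th * real n)"
proof -
  have n0: "0 < real n" using thn th by (metis mult_eq_0_iff not_one_le_zero of_nat_0_less_iff of_nat_0 gr0I)
  have "real (i * w) = real i * real w" by simp
  also have "\<dots> \<le> real N2 * (2 * th * real n)" using i w by (intro mult_mono) auto
  finally have num: "real (i * w) + 1 \<le> (2 * real N2 + 1) * (th * real n)" using thn by (simp add: algebra_simps)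
  have lpos: "0 < l" using l l0 by linarith
  have "(l0 / 2)^2 \<le> l^2" using l l0 by (intro power_mono) auto
  then have den: "l0^2 / 4 * (th * real n)^2 \<le> l^2 * (th * real n)^2"
    by (intro mult_right_mono) (auto simp: power_divide)
  have dpos: "0 < l0^2 / 4 * (th * real n)^2" using l0 th n0 by simp
  have "(real (i * w) + 1) / (l^2 * (th * real n)^2) \<le> ((2 * real N2 + 1) * (th * real n)) / (l0^2 / 4 * (th * real n)^2)"
  proof (rule frac_le)
    show "0 \<le> (2 * real N2 + 1) * (th * real n)" using th n0 by simp
  qed (use num den dpos in auto)
  also have "\<dots> = 4 * (2 * real N2 + 1) / (l0^2 * th * real n)"
    using th n0 l0 by (simp add: field_simps power2_eq_square)
  finally show ?thesis .
qed

lemma ereal_div_ge: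
  assumes "ereal a \<le> x" "0 < r"
  shows "ereal (a / r) \<le> x / ereal r"
proof -
  have "x / ereal r = x * ereal (1 / r)" using assms(2) by (simp add: divide_ereal_def inverse_eq_divide)
  moreover have "ereal a * ereal (1 / r) \<le> x * ereal (1 / r)"
    using assms by (intro ereal_mult_right_mono) auto
  ultimately show ?thesis by (simp add: divide_real_def)
qed

lemma lin3:
  fixes X Y Z U E W t a b :: real
  shows "X \<le> E / 2 \<Longrightarrow> Y = 2 * W + 2 * Z \<Longrightarrow> Z \<le> 2 * U \<Longrightarrow> W \<le> 2 * t \<Longrightarrow>
    10 * a + 4 * b + 8 * t + 4 * U \<le> E / 2 \<Longrightarrow> 0 \<le> a \<Longrightarrow> 0 \<le> b \<Longrightarrow> 1 \<le> t \<Longrightarrow> X + Y + 1 \<le> E"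
  by linarith

lemma lin4:
  fixes X V U E t a b :: real
  shows "X \<le> E / 2 \<Longrightarrow> V \<le> 4 * a \<Longrightarrow> 10 * a + 4 * b + 8 * t + 4 * U \<le> E / 2 \<Longrightarrow>
    0 \<le> a \<Longrightarrow> 0 \<le> b \<Longrightarrow> 0 \<le> t \<Longrightarrow> 0 \<le> U \<Longrightarrow> X + 2 * (V + t) \<le> E"
  unfolding distrib_left by linarith

lemma numeric_conds:
  fixes lam0 mu0 eta th tau lam mu W :: real and n N :: nat
  assumes lam0: "0 < lam0" and mu0: "0 < mu0" and th: "0 < th"
    and thM: "th * (10 / mu0 + 4 / lam0 + 8 + 4 * lam0) \<le> 1"
    and thM2: "th * (10 / mu0 + 4 / lam0 + 8 + 4 * lam0) \<le> eta / 2"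
    and NC: "(2 * lam0 * (\<bar>tau\<bar> + 1) + 2) / th \<le> real N"
    and thn: "1 \<le> th * real n" and W1: "th * real n \<le> W" and W2: "W \<le> th * real n + 1"
    and lam: "lam0 / 2 \<le> lam" "lam \<le> 2 * lam0" and mu: "mu0 / 2 \<le> mu"
    and ev4: "\<bar>lam - lam0\<bar> * \<bar>tau\<bar> \<le> eta / 2"
    and ev5: "(1 + 2 * real N * th) * \<bar>1 / mu - 1 / mu0\<bar> \<le> eta / 2"
  shows "real n + 1 \<le> real N * W"
    "real n * tau + (1 / mu + 2 * (W / mu + th * real n)) \<le> real N * W / lam - (W / lam + th * real n)"
    "\<bar>lam - lam0\<bar> * (real n * \<bar>tau\<bar>) + 2 * lam * (W / lam + th * real n) + 1 \<le> eta * real n"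
    "(real n + real N * W) * \<bar>1 / mu - 1 / mu0\<bar> + 2 * (W / mu + th * real n) \<le> eta * real n"
proof -
  define C where "C = 2 * lam0 * (\<bar>tau\<bar> + 1) + 2"
  have n0: "0 < real n" using thn th by (metis mult_eq_0_iff not_one_le_zero of_nat_0_less_iff of_nat_0 gr0I)
  have n1: "1 \<le> real n" using n0 by (simp add: Suc_leI)
  have W2': "W \<le> 2 * (th * real n)" using W2 thn by linarith
  have W0: "0 \<le> W" using W1 th n0 by (smt (verit) mult_pos_pos)
  have lampos: "0 < lam" using lam lam0 by linarith
  have mupos: "0 < mu" using mu mu0 by linarith
  have Cth: "C / th * (th * real n) = C * real n" using th by simp
  have N0: "0 \<le> C / th" unfolding C_def using th lam0 by simp
  have NW: "C * real n \<le> real N * W"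
    using mult_mono[OF NC[folded C_def] W1 _ ] N0 th n0 Cth by (simp add: mult_nonneg_nonneg)
  have C2: "2 \<le> C" unfolding C_def using lam0 by simp
  have "2 * real n \<le> C * real n" by (rule mult_right_mono) (use C2 n0 in auto)
  then show g1: "real n + 1 \<le> real N * W" using NW n1 by linarith
  have imu: "1 / mu \<le> 2 / mu0" using mu mu0 by (simp add: field_simps)
  have ilam: "1 / lam \<le> 2 / lam0" using lam lam0 by (simp add: field_simps)
  have ilam2: "1 / (2 * lam0) \<le> 1 / lam" using lam lam0 lampos by (simp add: field_simps)
  have Wmu: "W / mu \<le> (2 * (th * real n)) * (2 / mu0)"
    using mult_mono[OF W2' imu] W0 mu0 th n0 mupos by (simp add: divide_inverse)
  have Wlam: "W / lam \<le> (2 * (th * real n)) * (2 / lam0)"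
    using mult_mono[OF W2' ilam] W0 lam0 th n0 lampos by (simp add: divide_inverse)
  have NWlam0: "C * real n * (1 / (2 * lam0)) \<le> real N * W * (1 / lam)"
  proof (rule mult_mono[OF NW ilam2])
    show "0 \<le> real N * W" using NW C2 n0 by (smt (verit) mult_nonneg_nonneg)
  qed (use lam0 in simp)
  have NWlam: "C * real n * (1 / (2 * lam0)) \<le> real N * W / lam" using NWlam0 by simp
  have Cl: "C * real n * (1 / (2 * lam0)) = real n * (\<bar>tau\<bar> + 1) + real n / lam0"
    unfolding C_def using lam0 by (simp add: field_simps)
  have "(2 / mu0) * 1 \<le> (2 / mu0) * (th * real n)" by (rule mult_left_mono) (use thn mu0 in auto)
  then have imu2: "1 / mu \<le> (2 / mu0) * (th * real n)" using imu by simp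
  have tau1: "real n * tau \<le> real n * \<bar>tau\<bar>" using n0 by (simp add: mult_left_mono)
  have key: "real n * (th * (10 / mu0 + 4 / lam0 + 8 + 4 * lam0)) \<le> real n"
    using thM n0 by (simp add: mult_left_le)
  have lam0n: "0 \<le> real n / lam0" using n0 lam0 by simp
  define t where "t = th * real n"
  define a where "a = t / mu0"
  define b where "b = t / lam0"
  have Wmu': "W / mu \<le> 4 * a" using Wmu unfolding a_def t_def by (simp add: field_simps)
  have Wlam': "W / lam \<le> 4 * b" using Wlam unfolding b_def t_def by (simp add: field_simps)
  have imu2': "1 / mu \<le> 2 * a" using imu2 unfolding a_def t_def by (simp add: field_simps)
  have key': "10 * a + 4 * b + 8 * t + 4 * (lam0 * t) \<le> real n"
    using key unfolding a_def b_def t_def by (simp add: field_simps)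
  have lt0: "0 \<le> lam0 * t" unfolding t_def using lam0 th n0 by simp
  have t0: "0 \<le> t" unfolding t_def using th n0 by simp
  have NWl: "real n * \<bar>tau\<bar> + real n + real n / lam0 \<le> real N * W / lam" using NWlam Cl by (simp add: distrib_left)
  show "real n * tau + (1 / mu + 2 * (W / mu + th * real n)) \<le> real N * W / lam - (W / lam + th * real n)"
  proof -
    have l1: "real n * tau + (1 / mu + 2 * (W / mu + t)) \<le> real n * \<bar>tau\<bar> + 10 * a + 2 * t"
      using Wmu' imu2' tau1 by (smt (verit))
    have l2: "real n * \<bar>tau\<bar> + real n + real n / lam0 - 4 * b - t \<le> real N * W / lam - (W / lam + t)"
      using Wlam' NWl by (smt (verit))
    have l3: "10 * a + 2 * t \<le> real n + real n / lam0 - 4 * b - t" using key' lam0n lt0 t0 by (smt (verit))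
    show ?thesis using l1 l2 l3 unfolding t_def by (smt (verit))
  qed
  have keyE: "real n * (th * (10 / mu0 + 4 / lam0 + 8 + 4 * lam0)) \<le> real n * (eta / 2)"
    by (rule mult_left_mono) (use thM2 n0 in auto)
  have t1: "\<bar>lam - lam0\<bar> * (real n * \<bar>tau\<bar>) \<le> real n * (eta / 2)"
    using mult_left_mono[OF ev4, of "real n"] n0 by (simp add: algebra_simps)
  have t2: "2 * lam * (W / lam + th * real n) = 2 * W + 2 * lam * (th * real n)"
    using lampos by (simp add: field_simps)
  have t3: "lam * (th * real n) \<le> 2 * lam0 * (th * real n)" using lam th n0 by (simp add: mult_right_mono)
  have lam0i: "0 \<le> th * real n / mu0" "0 \<le> th * real n / lam0" using th n0 mu0 lam0 by auto
  show "\<bar>lam - lam0\<bar> * (real n * \<bar>tau\<bar>) + 2 * lam * (W / lam + th * real n) + 1 \<le> eta * real n"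
  proof -
    have keyE': "10 * a + 4 * b + 8 * t + 4 * (lam0 * t) \<le> real n * (eta / 2)"
      using keyE unfolding a_def b_def t_def by (simp add: field_simps)
    have a0: "0 \<le> a" "0 \<le> b" using lam0i unfolding a_def b_def t_def by auto
    have t2': "2 * lam * (W / lam + t) = 2 * W + 2 * (lam * t)" using lampos by (simp add: field_simps)
    have t3': "lam * t \<le> 2 * (lam0 * t)" using t3 unfolding t_def by simp
    have "\<bar>lam - lam0\<bar> * (real n * \<bar>tau\<bar>) + 2 * lam * (W / lam + t) + 1 \<le> eta * real n"
    proof -
      have e2: "real n * (eta / 2) = (eta * real n) / 2" by simp
      show ?thesis using lin3[OF t1[unfolded e2] t2' t3' W2'[folded t_def] keyE'[unfolded e2] a0 thn[folded t_def]] .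
    qed
    then show ?thesis unfolding t_def .
  qed
  have NW2: "real n + real N * W \<le> real n * (1 + 2 * real N * th)"
    using mult_left_mono[OF W2', of "real N"] by (simp add: algebra_simps)
  have u1: "(real n + real N * W) * \<bar>1 / mu - 1 / mu0\<bar> \<le> real n * (eta / 2)"
  proof -
    have "(real n + real N * W) * \<bar>1 / mu - 1 / mu0\<bar> \<le> real n * (1 + 2 * real N * th) * \<bar>1 / mu - 1 / mu0\<bar>"
      using NW2 by (simp add: mult_right_mono)
    also have "\<dots> \<le> real n * (eta / 2)" using mult_left_mono[OF ev5, of "real n"] n0 by (simp add: mult.assoc)
    finally show ?thesis .
  qed
  show "(real n + real N * W) * \<bar>1 / mu - 1 / mu0\<bar> + 2 * (W / mu + th * real n) \<le> eta * real n"
  proof -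
    have e2: "real n * (eta / 2) = (eta * real n) / 2" by simp
    have keyE': "10 * a + 4 * b + 8 * t + 4 * (lam0 * t) \<le> real n * (eta / 2)"
      using keyE unfolding a_def b_def t_def by (simp add: field_simps)
    have a0: "0 \<le> a" "0 \<le> b" using lam0i unfolding a_def b_def t_def by auto
    show ?thesis using lin4[OF u1[unfolded e2] Wmu' keyE'[unfolded e2] a0 t0 lt0] unfolding t_def .
  qed
qed

theorem mainTheorem5:
  fixes M :: "nat \<Rightarrow> 'a measure"
    and A S :: "nat \<Rightarrow> nat \<Rightarrow> 'a \<Rightarrow> real"
    and lam mu dn :: "nat \<Rightarrow> real"
    and lam0 mu0 d \<xi> :: real
  assumes ps: "\<And>n. n \<ge> 1 \<Longrightarrow> prob_space (M n)"
    and indep: "\<And>n. n \<ge> 1 \<Longrightarrow> prob_space.indep_vars (M n) (\<lambda>_. borel)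
                   (\<lambda>i. case i of Inl k \<Rightarrow> A n k | Inr m \<Rightarrow> S n m) UNIV"
    and distA: "\<And>n k. n \<ge> 1 \<Longrightarrow> distributed (M n) lborel (A n k) (exponential_density (lam n))"
    and distS: "\<And>n m. n \<ge> 1 \<Longrightarrow> distributed (M n) lborel (S n m) (exponential_density (mu n))"
    and lam_pos: "\<And>n. n \<ge> 1 \<Longrightarrow> lam n > 0" and mu_pos: "\<And>n. n \<ge> 1 \<Longrightarrow> mu n > 0" and dn_pos: "\<And>n. n \<ge> 1 \<Longrightarrow> dn n > 0"
    and lam_lim: "lam \<longlonglongrightarrow> lam0" and lam_gt: "lam0 > 0"
    and mu_lim: "mu \<longlonglongrightarrow> mu0"
    and d_pos: "d > 0" and mu_lb: "1 / d < mu0" and mu_ub: "mu0 < lam0"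
    and dn_lim: "(\<lambda>n. dn n / real n) \<longlonglongrightarrow> d"
    and xi_pos: "\<xi> > 0"
  shows "\<exists>E. (\<forall>n\<ge>1. E n \<in> sets (M n) \<and>
            {x \<in> space (M n).
               first_loss n d (dn n) (\<lambda>k. A n k x) (\<lambda>m. S n m x) / ereal (real n)
                 \<le> ereal ((((lam0 / mu0) * d - 1 / mu0) / (lam0 / mu0 - 1)) - \<xi>)} \<subseteq> E n)
           \<and> (\<lambda>n. measure (M n) (E n)) \<longlonglongrightarrow> 0"
proof -
  have mu0: "0 < mu0" using mu_lb d_pos by (smt (verit) divide_pos_pos)
  have md: "1 < mu0 * d" using mu_lb d_pos by (simp add: field_simps)
  define om where "om = ((lam0 / mu0) * d - 1 / mu0) / (lam0 / mu0 - 1)"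
  define tau where "tau = om - \<xi> / 2"
  have om2: "om = (lam0 * d - 1) / (lam0 - mu0)"
    unfolding om_def using mu0 mu_ub by (simp add: field_simps)
  have omeq: "(lam0 - mu0) * om = lam0 * d - 1" unfolding om2 using mu_ub by simp
  define eta where "eta = min ((d - 1 / mu0) / 2) ((lam0 - mu0) * \<xi> / (2 * (lam0 + 1 + mu0)))"
  have dm: "0 < d - 1 / mu0" using md mu0 by (simp add: field_simps)
  have eta0: "0 < eta" unfolding eta_def using dm mu_ub xi_pos lam_gt mu0 by simp
  have P3: "mu0 * eta < mu0 * d - 1"
  proof -
    have "eta \<le> (d - 1 / mu0) / 2" unfolding eta_def by (rule min.cobounded1)
    moreover have "(d - 1 / mu0) / 2 < d - 1 / mu0" using dm by simp
    ultimately have "eta < d - 1 / mu0" by (rule order.strict_trans1)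
    then have "mu0 * eta < mu0 * (d - 1 / mu0)" using mu0 by simp
    then show ?thesis using mu0 by (simp add: right_diff_distrib)
  qed
  have P4: "(lam0 - mu0) * tau + eta * (lam0 + 1 + mu0) \<le> lam0 * d - 1"
  proof -
    have "eta \<le> (lam0 - mu0) * \<xi> / (2 * (lam0 + 1 + mu0))" unfolding eta_def by (rule min.cobounded2)
    then have "eta * (lam0 + 1 + mu0) \<le> (lam0 - mu0) * \<xi> / 2"
      using lam_gt mu0 by (simp add: field_simps)
    moreover have "(lam0 - mu0) * tau = lam0 * d - 1 - (lam0 - mu0) * \<xi> / 2"
      unfolding tau_def using omeq by (simp add: algebra_simps)
    ultimately show ?thesis by linarith
  qed
  define Mc where "Mc = 10 / mu0 + 4 / lam0 + 8 + 4 * lam0"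
  have Mc0: "0 < Mc" unfolding Mc_def using mu0 lam_gt by (simp add: add_pos_pos)
  define th where "th = min (1 / Mc) (eta / (2 * Mc))"
  have th0: "0 < th" unfolding th_def using Mc0 eta0 by simp
  have thM: "th * Mc \<le> 1" unfolding th_def using Mc0
    by (metis min.cobounded1 mult.commute pos_le_divide_eq)
  have thM2: "th * Mc \<le> eta / 2"
  proof -
    have "th \<le> eta / (2 * Mc)" unfolding th_def by (rule min.cobounded2)
    then have "th * (2 * Mc) \<le> eta" using Mc0 by (simp add: pos_le_divide_eq)
    then show ?thesis by simp
  qed
  define N where "N = nat \<lceil>(2 * lam0 * (\<bar>tau\<bar> + 1) + 2) / th\<rceil>"
  have NC: "(2 * lam0 * (\<bar>tau\<bar> + 1) + 2) / th \<le> real N" unfolding N_def by (rule real_nat_ceiling_ge)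
  define N2 where "N2 = 2 * N + 1"
  define w where "w = (\<lambda>n::nat. nat \<lceil>th * real n\<rceil>)"
  have w1: "\<And>n. th * real n \<le> real (w n)" unfolding w_def by (rule real_nat_ceiling_ge)
  have w2: "\<And>n. real (w n) \<le> th * real n + 1"
    unfolding w_def using th0 by (simp add: of_nat_nat)
  have ev1: "\<forall>\<^sub>F n in sequentially. 1 \<le> th * real n"
  proof -
    have "\<forall>\<^sub>F n in sequentially. 1 / th \<le> real n"
      using filterlim_real_sequentially by (simp add: filterlim_at_top)
    then show ?thesis by eventually_elim (use th0 in \<open>simp add: field_simps\<close>)
  qed
  have ev2: "\<forall>\<^sub>F n in sequentially. lam0 / 2 < lam n" by (rule order_tendstoD(1)[OF lam_lim]) (use lam_gt in simp)
  have ev3: "\<forall>\<^sub>F n in sequentially. lam n < 2 * lam0" by (rule order_tendstoD(2)[OF lam_lim]) (use lam_gt in simp)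
  have ev4: "\<forall>\<^sub>F n in sequentially. mu0 / 2 < mu n" by (rule order_tendstoD(1)[OF mu_lim]) (use mu0 in simp)
  have ev5: "\<forall>\<^sub>F n in sequentially. \<bar>lam n - lam0\<bar> * \<bar>tau\<bar> \<le> eta / 2"
  proof -
    define r where "r = eta / (2 * (\<bar>tau\<bar> + 1))"
    have r0: "0 < r" unfolding r_def using eta0 by simp
    have "\<forall>\<^sub>F n in sequentially. dist (lam n) lam0 < r" using lam_lim r0 by (simp add: tendsto_iff)
    then show ?thesis
    proof eventually_elim
      case (elim n)
      then have "\<bar>lam n - lam0\<bar> \<le> r" by (simp add: dist_real_def)
      then have "\<bar>lam n - lam0\<bar> * \<bar>tau\<bar> \<le> r * (\<bar>tau\<bar> + 1)" by (intro mult_mono) auto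
      also have "\<dots> = eta / 2" unfolding r_def by (simp add: field_simps)
      finally show ?case .
    qed
  qed
  have ev6: "\<forall>\<^sub>F n in sequentially. (1 + 2 * real N * th) * \<bar>1 / mu n - 1 / mu0\<bar> \<le> eta / 2"
  proof -
    define r where "r = eta / (2 * (1 + 2 * real N * th))"
    have pos: "0 < 1 + 2 * real N * th" using th0 by (simp add: add_pos_nonneg)
    have r0: "0 < r" unfolding r_def using eta0 pos by simp
    have lim: "(\<lambda>n. 1 / mu n) \<longlonglongrightarrow> 1 / mu0" by (rule tendsto_divide[OF tendsto_const mu_lim]) (use mu0 in simp)
    have "\<forall>\<^sub>F n in sequentially. dist (1 / mu n) (1 / mu0) < r" using lim r0 by (simp add: tendsto_iff)
    then show ?thesis
    proof eventually_elim
      case (elim n)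
      then have "\<bar>1 / mu n - 1 / mu0\<bar> \<le> r" by (simp add: dist_real_def)
      then have "(1 + 2 * real N * th) * \<bar>1 / mu n - 1 / mu0\<bar> \<le> (1 + 2 * real N * th) * r"
        using pos by (intro mult_left_mono) auto
      also have "\<dots> = eta / 2" unfolding r_def using pos by (simp add: field_simps)
      finally show ?case .
    qed
  qed
  have ev7: "\<forall>\<^sub>F n in sequentially. d - eta < dn n / real n"
    by (rule order_tendstoD(1)[OF dn_lim]) (use eta0 in simp)
  have ev8: "\<forall>\<^sub>F n in sequentially. (1::nat) \<le> n" by (rule eventually_ge_at_top)
  have "\<forall>\<^sub>F n in sequentially. 1 \<le> th * real n \<and> lam0 / 2 < lam n \<and> lam n < 2 * lam0 \<and> mu0 / 2 < mu n \<and>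
      \<bar>lam n - lam0\<bar> * \<bar>tau\<bar> \<le> eta / 2 \<and> (1 + 2 * real N * th) * \<bar>1 / mu n - 1 / mu0\<bar> \<le> eta / 2 \<and>
      d - eta < dn n / real n \<and> 1 \<le> n"
    using ev1 ev2 ev3 ev4 ev5 ev6 ev7 ev8 by eventually_elim auto
  then obtain n0 where n0: "\<And>n. n \<ge> n0 \<Longrightarrow> 1 \<le> th * real n \<and> lam0 / 2 < lam n \<and> lam n < 2 * lam0 \<and> mu0 / 2 < mu n \<and>
      \<bar>lam n - lam0\<bar> * \<bar>tau\<bar> \<le> eta / 2 \<and> (1 + 2 * real N * th) * \<bar>1 / mu n - 1 / mu0\<bar> \<le> eta / 2 \<and>
      d - eta < dn n / real n \<and> 1 \<le> n"
    unfolding eventually_sequentially by blast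
  define good where "good n x \<longleftrightarrow> (\<forall>k. 0 < A n k x) \<and> (\<forall>j. 0 < S n j x) \<and>
      (\<forall>i\<le>N. \<bar>(\<Sum>l\<le>i * w n. A n l x) - (real (i * w n) + 1) / lam n\<bar> < th * real n) \<and>
      (\<forall>i\<le>N2. \<bar>(\<Sum>l\<le>i * w n. S n l x) - (real (i * w n) + 1) / mu n\<bar> < th * real n)" for n x
  define E where "E n = (if n < n0 then space (M n) else {x \<in> space (M n). \<not> good n x})" for n
  have thM': "th * (10 / mu0 + 4 / lam0 + 8 + 4 * lam0) \<le> 1" using thM unfolding Mc_def .
  have thM2': "th * (10 / mu0 + 4 / lam0 + 8 + 4 * lam0) \<le> eta / 2" using thM2 unfolding Mc_def .
  have good_tau: "ereal (real n * tau) \<le> first_loss n d (dn n) (\<lambda>k. A n k x) (\<lambda>m. S n m x)"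
    if nn: "n \<ge> n0" and g: "good n x" for n x
  proof -
    note nc = n0[OF nn]
    have n1: "1 \<le> n" using nc by simp
    have lp: "0 < lam n" "0 < mu n" using lam_pos[OF n1] mu_pos[OF n1] by auto
    interpret Q: qd n d "dn n" "\<lambda>k. A n k x" "\<lambda>m. S n m x"
    proof
      show "\<And>k. 0 < A n k x" "\<And>j. 0 \<le> S n j x" using g unfolding good_def by (auto intro: less_imp_le)
      show "0 < dn n" using dn_pos[OF n1] .
      show "0 < real n * d" using n1 d_pos by simp
    qed
    have thn: "1 \<le> th * real n" using nc by simp
    note NCs = numeric_conds[OF lam_gt mu0 th0 thM' thM2' NC thn w1 w2, of "lam n" "mu n"]
    have NC1: "real n + 1 \<le> real N * real (w n)" using NCs nc by auto
    have NC2: "real n * tau + (1 / mu n + 2 * (real (w n) / mu n + th * real n))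
        \<le> real N * real (w n) / lam n - (real (w n) / lam n + th * real n)" using NCs nc by auto
    have NC3: "\<bar>lam n - lam0\<bar> * (real n * \<bar>tau\<bar>) + 2 * lam n * (real (w n) / lam n + th * real n) + 1 \<le> eta * real n"
      using NCs nc by auto
    have NC4: "(real n + real N * real (w n)) * \<bar>1 / mu n - 1 / mu0\<bar> + 2 * (real (w n) / mu n + th * real n) \<le> eta * real n"
      using NCs nc by auto
    have nw1: "n + 1 \<le> N * w n"
    proof -
      have "real (n + 1) \<le> real (N * w n)" using NC1 by simp
      then show ?thesis by (simp only: of_nat_le_iff)
    qed
    have nw2: "n + N * w n + 1 \<le> N2 * w n"
    proof -
      have "N2 * w n = 2 * (N * w n) + w n" unfolding N2_def by (simp add: algebra_simps)
      then show ?thesis using nw1 by linarith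
    qed
    have w1n: "1 \<le> w n"
    proof -
      have "1 \<le> real (w n)" using thn w1[of n] by linarith
      then show ?thesis by simp
    qed
    have dnn: "real n * (d - eta) \<le> dn n"
    proof -
      have "d - eta < dn n / real n" using nc by simp
      then have "(d - eta) * real n < dn n" using n1 by (simp add: pos_less_divide_eq)
      then show ?thesis by (simp add: mult.commute)
    qed
    have lost_ge: "real n * tau \<le> deadline n d (dn n) (\<lambda>k. A n k x) c"
      if c: "is_cust n c" "\<And>m. c \<notin> Q.Sd m" for c
    proof (rule Q.no_loss_grid[where lam = "lam n" and mu = "mu n" and e = "th * real n" and w = "w n"
          and N = N and ?N2.0 = N2 and ?lam0.0 = lam0 and ?mu0.0 = mu0 and eta = eta])
      show "0 < lam n" "0 < mu n" by (rule lp(1), rule lp(2))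
      show "1 \<le> w n" by (rule w1n)
      show "0 \<le> th * real n" using th0 by simp
      show "\<And>i. i \<le> N \<Longrightarrow> \<bar>Q.ak (i * w n) - (real (i * w n) + 1) / lam n\<bar> \<le> th * real n"
        using g unfolding good_def Q.ak_def by (auto intro: less_imp_le)
      show "\<And>i. i \<le> N2 \<Longrightarrow> \<bar>(\<Sum>l\<le>i * w n. S n l x) - (real (i * w n) + 1) / mu n\<bar> \<le> th * real n"
        using g unfolding good_def by (auto intro: less_imp_le)
      show "n + 1 \<le> N * w n" by (rule nw1)
      show "n + N * w n + 1 \<le> N2 * w n" by (rule nw2)
      show "real n * tau + (1 / mu n + 2 * (real (w n) / mu n + th * real n))
        \<le> real (N * w n) / lam n - (real (w n) / lam n + th * real n)" using NC2 by simp
      show "\<bar>lam n - lam0\<bar> * (real n * \<bar>tau\<bar>) + 2 * lam n * (real (w n) / lam n + th * real n) + 1 \<le> eta * real n"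
        by (rule NC3)
      show "real (n + N * w n) * \<bar>1 / mu n - 1 / mu0\<bar> + 2 * (real (w n) / mu n + th * real n) \<le> eta * real n"
        using NC4 by simp
      show "0 < mu0" "mu0 < lam0" "mu0 * eta < mu0 * d - 1"
        "(lam0 - mu0) * tau + eta * (lam0 + 1 + mu0) \<le> lam0 * d - 1" "real n * (d - eta) \<le> dn n" "0 \<le> eta"
        using mu0 mu_ub P3 P4 dnn eta0 by auto
      show "is_cust n c" "\<And>m. c \<notin> Q.Sd m" using c by auto
    qed
    show ?thesis
      unfolding first_loss_def
    proof (rule Inf_greatest)
      fix y assume "y \<in> (\<lambda>c. ereal (deadline n d (dn n) (\<lambda>k. A n k x) c)) ` lost n d (dn n) (\<lambda>k. A n k x) (\<lambda>m. S n m x)"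
      then obtain c where c: "y = ereal (deadline n d (dn n) (\<lambda>k. A n k x) c)"
        "c \<in> lost n d (dn n) (\<lambda>k. A n k x) (\<lambda>m. S n m x)" by auto
      have "is_cust n c" "\<And>m. c \<notin> Q.Sd m" using c(2) unfolding lost_def served_def Q.Sd_def by auto
      then show "ereal (real n * tau) \<le> y" using lost_ge c(1) by simp
    qed
  qed
  have measE: "E n \<in> sets (M n)" if n1: "n \<ge> 1" for n
  proof (cases "n < n0")
    case True then show ?thesis unfolding E_def by simp
  next
    case False
    have [measurable]: "\<And>k. A n k \<in> borel_measurable (M n)"
      using distributed_measurable[OF distA[OF n1]] by simp
    have [measurable]: "\<And>k. S n k \<in> borel_measurable (M n)"
      using distributed_measurable[OF distS[OF n1]] by simp
    have "{x \<in> space (M n). \<not> good n x} \<in> sets (M n)" unfolding good_def by measurable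
    then show ?thesis unfolding E_def using False by simp
  qed
  have subE: "{x \<in> space (M n).
               first_loss n d (dn n) (\<lambda>k. A n k x) (\<lambda>m. S n m x) / ereal (real n)
                 \<le> ereal ((((lam0 / mu0) * d - 1 / mu0) / (lam0 / mu0 - 1)) - \<xi>)} \<subseteq> E n"
    if n1: "n \<ge> 1" for n
  proof
    fix x assume x: "x \<in> {x \<in> space (M n).
               first_loss n d (dn n) (\<lambda>k. A n k x) (\<lambda>m. S n m x) / ereal (real n)
                 \<le> ereal ((((lam0 / mu0) * d - 1 / mu0) / (lam0 / mu0 - 1)) - \<xi>)}"
    show "x \<in> E n"
    proof (cases "n < n0")
      case True then show ?thesis using x unfolding E_def by simp
    next
      case False
      show ?thesis
      proof (rule ccontr)
        assume "x \<notin> E n"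
        then have g: "good n x" using x False unfolding E_def by auto
        have "ereal (real n * tau) \<le> first_loss n d (dn n) (\<lambda>k. A n k x) (\<lambda>m. S n m x)"
          using good_tau[OF _ g] False by simp
        then have a0: "ereal (real n * tau / real n) \<le> first_loss n d (dn n) (\<lambda>k. A n k x) (\<lambda>m. S n m x) / ereal (real n)"
          by (rule ereal_div_ge) (use n1 in simp)
        have "real n * tau / real n = tau" using n1 by simp
        then have a: "ereal tau \<le> first_loss n d (dn n) (\<lambda>k. A n k x) (\<lambda>m. S n m x) / ereal (real n)"
          using a0 by simp
        have b: "first_loss n d (dn n) (\<lambda>k. A n k x) (\<lambda>m. S n m x) / ereal (real n) \<le> ereal (om - \<xi>)"
          using x unfolding om_def by simp
        have "ereal tau \<le> ereal (om - \<xi>)" using a b by (rule order_trans)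
        then show False unfolding tau_def using xi_pos by simp
      qed
    qed
  qed
  define TA where "TA = 4 * (2 * real N2 + 1) / (lam0^2 * th)"
  define TS where "TS = 4 * (2 * real N2 + 1) / (mu0^2 * th)"
  define B where "B = real (N + 1) * TA + real (N2 + 1) * TS"
  have bound: "measure (M n) (E n) \<le> B / real n" if nn: "n \<ge> n0" for n
  proof -
    note nc = n0[OF nn]
    have n1: "1 \<le> n" using nc by simp
    interpret P: prob_space "M n" by (rule ps[OF n1])
    have [measurable]: "\<And>k. A n k \<in> borel_measurable (M n)"
      using distributed_measurable[OF distA[OF n1]] by simp
    have [measurable]: "\<And>k. S n k \<in> borel_measurable (M n)"
      using distributed_measurable[OF distS[OF n1]] by simp
    have thn: "1 \<le> th * real n" using nc by simp
    have wb: "real (w n) \<le> 2 * th * real n" using w2[of n] thn by linarith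
    have indA: "P.indep_vars (\<lambda>_. borel) (A n) {..k}" for k
    proof -
      have "P.indep_vars (\<lambda>_. borel) (\<lambda>i. case i of Inl k \<Rightarrow> A n k | Inr m \<Rightarrow> S n m) (Inl ` {..k})"
        by (rule P.indep_vars_subset[OF indep[OF n1]]) simp
      from P.indep_vars_reindex[OF this] show ?thesis by (simp add: inj_on_def)
    qed
    have indS: "P.indep_vars (\<lambda>_. borel) (S n) {..k}" for k
    proof -
      have "P.indep_vars (\<lambda>_. borel) (\<lambda>i. case i of Inl k \<Rightarrow> A n k | Inr m \<Rightarrow> S n m) (Inr ` {..k})"
        by (rule P.indep_vars_subset[OF indep[OF n1]]) simp
      from P.indep_vars_reindex[OF this] show ?thesis by (simp add: inj_on_def)
    qed
    define Z where "Z = {x \<in> space (M n). \<not> ((\<forall>k. 0 < A n k x) \<and> (\<forall>j. 0 < S n j x))}"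
    have Zs: "Z \<in> sets (M n)" unfolding Z_def by measurable
    have AEA: "AE x in M n. 0 < A n k x" for k
    proof -
      have "P.prob {x \<in> space (M n). 0 < A n k x} = 1"
        using P.exponential_distributedD_gt[OF distA[OF n1] _ lam_pos[OF n1], of 0] by simp
      from P.AE_prob_1[OF this] show ?thesis by eventually_elim auto
    qed
    have AES: "AE x in M n. 0 < S n k x" for k
    proof -
      have "P.prob {x \<in> space (M n). 0 < S n k x} = 1"
        using P.exponential_distributedD_gt[OF distS[OF n1] _ mu_pos[OF n1], of 0] by simp
      from P.AE_prob_1[OF this] show ?thesis by eventually_elim auto
    qed
    have "AE x in M n. (\<forall>k. 0 < A n k x) \<and> (\<forall>j. 0 < S n j x)"
      using AEA AES by (simp add: AE_all_countable)
    then have Znull: "Z \<in> null_sets (M n)"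
      using AE_iff_null[of "M n" "\<lambda>x. (\<forall>k. 0 < A n k x) \<and> (\<forall>j. 0 < S n j x)"] Zs unfolding Z_def by simp
    define BA where "BA i = {x \<in> space (M n). th * real n \<le> \<bar>(\<Sum>l\<le>i * w n. A n l x) - (real (i * w n) + 1) / lam n\<bar>}" for i
    define BS where "BS i = {x \<in> space (M n). th * real n \<le> \<bar>(\<Sum>l\<le>i * w n. S n l x) - (real (i * w n) + 1) / mu n\<bar>}" for i
    have BAs: "BA i \<in> sets (M n)" for i unfolding BA_def by measurable
    have BSs: "BS i \<in> sets (M n)" for i unfolding BS_def by measurable
    have Esub: "E n \<subseteq> ((\<Union>i\<in>{..N}. BA i) \<union> (\<Union>i\<in>{..N2}. BS i)) \<union> Z"
      using nn unfolding E_def good_def BA_def BS_def Z_def by (auto simp: not_less)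
    have Us: "(\<Union>i\<in>{..N}. BA i) \<in> sets (M n)" "(\<Union>i\<in>{..N2}. BS i) \<in> sets (M n)" using BAs BSs by auto
    have "measure (M n) (E n) \<le> measure (M n) (((\<Union>i\<in>{..N}. BA i) \<union> (\<Union>i\<in>{..N2}. BS i)) \<union> Z)"
      by (rule P.finite_measure_mono[OF Esub]) (use Us Zs in auto)
    also have "\<dots> = measure (M n) ((\<Union>i\<in>{..N}. BA i) \<union> (\<Union>i\<in>{..N2}. BS i))"
      by (rule measure_Un_null_set[OF _ Znull]) (use Us in auto)
    also have "\<dots> \<le> measure (M n) (\<Union>i\<in>{..N}. BA i) + measure (M n) (\<Union>i\<in>{..N2}. BS i)"
      by (rule measure_Un_le) (use Us in auto)
    also have "\<dots> \<le> (\<Sum>i\<in>{..N}. measure (M n) (BA i)) + (\<Sum>i\<in>{..N2}. measure (M n) (BS i))"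
      by (intro add_mono measure_UNION_le) (use BAs BSs in auto)
    also have "\<dots> \<le> real (N + 1) * (TA / real n) + real (N2 + 1) * (TS / real n)"
    proof (intro add_mono)
      have "(\<Sum>i\<in>{..N}. measure (M n) (BA i)) \<le> real (card {..N}) * (TA / real n)"
      proof (rule sum_bounded_above)
        fix i assume i: "i \<in> {..N}"
        have "measure (M n) (BA i) \<le> (real (i * w n) + 1) / ((lam n)^2 * (th * real n)^2)"
          unfolding BA_def
          by (rule P.sum_exp_dev[OF indA distA[OF n1] lam_pos[OF n1]]) (use th0 n1 in simp)
        also have "\<dots> \<le> 4 * (2 * real N2 + 1) / (lam0^2 * th * real n)"
          by (rule term_bound) (use lam_gt nc th0 thn wb i in \<open>auto simp: N2_def\<close>)
        also have "\<dots> = TA / real n" unfolding TA_def by simp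
        finally show "measure (M n) (BA i) \<le> TA / real n" .
      qed
      then show "(\<Sum>i\<in>{..N}. measure (M n) (BA i)) \<le> real (N + 1) * (TA / real n)" by simp
      have "(\<Sum>i\<in>{..N2}. measure (M n) (BS i)) \<le> real (card {..N2}) * (TS / real n)"
      proof (rule sum_bounded_above)
        fix i assume i: "i \<in> {..N2}"
        have "measure (M n) (BS i) \<le> (real (i * w n) + 1) / ((mu n)^2 * (th * real n)^2)"
          unfolding BS_def
          by (rule P.sum_exp_dev[OF indS distS[OF n1] mu_pos[OF n1]]) (use th0 n1 in simp)
        also have "\<dots> \<le> 4 * (2 * real N2 + 1) / (mu0^2 * th * real n)"
          by (rule term_bound) (use mu0 nc th0 thn wb i in auto)
        also have "\<dots> = TS / real n" unfolding TS_def by simp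
        finally show "measure (M n) (BS i) \<le> TS / real n" .
      qed
      then show "(\<Sum>i\<in>{..N2}. measure (M n) (BS i)) \<le> real (N2 + 1) * (TS / real n)" by simp
    qed
    also have "\<dots> = B / real n" unfolding B_def by (simp add: add_divide_distrib)
    finally show ?thesis .
  qed
  have lim: "(\<lambda>n. measure (M n) (E n)) \<longlonglongrightarrow> 0"
  proof (rule Lim_null_comparison)
    show "\<forall>\<^sub>F n in sequentially. norm (measure (M n) (E n)) \<le> B / real n"
      unfolding eventually_sequentially using bound by auto
    show "(\<lambda>n. B / real n) \<longlonglongrightarrow> 0" by (rule lim_const_over_n)
  qed
  show ?thesis using measE subE lim by blast
qed

end
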